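(* Consider the hybrid system $\dot x\in F(x)$, $x\in C$; $x^+\in G(x)$, $x\in D$, with $C,D\subseteq\mathbb{R}^n$, $F,G:\mathbb{R}^n\rightrightarrows\mathbb{R}^n$ satisfying the hybrid basic conditions (A1)–(A3) below, and a $t$-complete solution $\phi^\star$. Suppose: (i) $G(D)\cap D=\emptyset$, $G(D)\subseteq C$, and $G$ is single-valued and proper; (ii) $F(x)\cap T_C(x)=\emptyset$ for all $x\in C\cap D$; (iii) $-F(x)\cap T_C(x)=\emptyset$ for all $x\in C\cap G(D)$; (iv) either $D$ is bounded or $\phi^\star$ is bounded. If $\phi^\star$ is stable (respectively asymptotically stable) with respect to $\rho_{\mathcal A}$, then $\phi^\star$ is stable (respectively asymptotically stable) in graphical sense.
   Context: Notation: Euclidean norm $\|\cdot\|$, $\mathcal B_s=\{x:\|x\|\le s\}$, $\operatorname{dom}F=\{x:F(x)\ne\emptyset\}$. (A1) $C,D$ closed; (A2) $F$ outer semicontinuous and locally bounded relative to $C$, $C\subseteq\operatorname{dom}F$, $F(x)$ convex for $x\in C$; (A3) $G$ outer semicontinuous and locally bounded relative to $D$, $D\subseteq\operatorname{dom}G$. Solutions are defined on hybrid time domains $E\subseteq\mathbb{R}_{\ge0}\times\mathbb{N}$ (sets whose truncations are finite unions $\bigcup_j[t_j,t_{j+1}]\times\{j\}$, $0=t_0\le t_1\le\cdots$), with $t\mapsto\phi(t,j)$ locally absolutely continuous, $\phi(0,0)\in C\cup D$, flowing in $C$ with $\dot\phi\in F(\phi)$ a.e. on intervals of flow, and with $\phi(t,j)\in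 D$, $\phi(t,j+1)\in G(\phi(t,j))$ whenever $(t,j),(t,j+1)\in\operatorname{dom}\phi$. A solution is maximal if it cannot be extended, $t$-complete if $\sup_{(t,j)\in\operatorname{dom}\phi}t=\infty$, bounded if $\sup\|\phi(t,j)\|<\infty$. $T_C(x)$ is the Bouligand tangent cone; $G$ proper means preimages of compact sets are compact. $\mathcal A=\{(x_1,x_2)\in(C\cup D\cup G(D))^2: x_1=x_2, \text{ or } (x_2\in D\wedge x_1\in G(x_2)), \text{ or } (x_1\in D\wedge x_2\in G(x_1))\}$, $\rho_{\mathcal A}(x,y)=\inf_{(u,v)\in\mathcal A}\|(x-u,y-v)\|$. Stable with respect to $\rho_{\mathcal A}$: for every $\varepsilon_w>0$ there is $\delta_w>0$ such that every maximal solution $\phi$ with $\rho_{\mathcal A}(\phi^\star(0,0),\phi(0,0))<\delta_w$ satisfies (a) for all $(t,j)\in\operatorname{dom}\phi^\star$ there is $(t,j')\in\operatorname{dom}\phi$ with $\rho_{\mathcal A}(\phi^\star(t,j),\phi(t,j'))<\varepsilon_w$, and (b) for all $(t,j')\in\operatorname{dom}\phi$ there is $(t,j)\in\operatorname{dom}\phi^\star$ with $\rho_{\mathcal A}(\phi^\star(t,j),\phi(t,j'))<\varepsilon_w$. Asymptotically stable w.r.t. $\rho_{\mathcal A}$: in addition there is $r_w>0$ such that for every $\varepsilon_w>0$ and every maximal $\phi$ with $\rho_{\mathcal A}(\phi^\star(0,0),\phi(0,0))<r_w$ there is $T_w\ge0$ such that (a) holds for all $(t,j)\in\operatorname{dom}\phi^\star$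 with $t\ge T_w$ and (b) holds for all $(t,j')\in\operatorname{dom}\phi$ with $t\ge T_w$. Stable in graphical sense: for every $\varepsilon>0$ there is $\delta>0$ such that every maximal solution $\phi$ with $\|\phi^\star(0,0)-\phi(0,0)\|<\delta$ satisfies (c) for all $(t,j)\in\operatorname{dom}\phi^\star$ there is $(t',j')\in\operatorname{dom}\phi$ with $|t-t'|<\varepsilon$ and $\|\phi^\star(t,j)-\phi(t',j')\|<\varepsilon$, and (d) for all $(t',j')\in\operatorname{dom}\phi$ there is $(t,j)\in\operatorname{dom}\phi^\star$ with $|t-t'|<\varepsilon$ and $\|\phi^\star(t,j)-\phi(t',j')\|<\varepsilon$. Asymptotically stable in graphical sense: in addition there is $r>0$ such that for every $\varepsilon>0$ and every maximal $\phi$ with $\|\phi^\star(0,0)-\phi(0,0)\|<r$ there is $T\ge0$ such that (c) holds for all $(t,j)\in\operatorname{dom}\phi^\star$ with $t\ge T$ and (d) holds for all $(t',j')\in\operatorname{dom}\phi$ with $t'\ge T$. *)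

theory Defs
  imports "HOL-Analysis.Analysis"
begin

definition osc_rel :: "('a::metric_space \<Rightarrow> 'b::metric_space set) \<Rightarrow> 'a set \<Rightarrow> bool" where
  "osc_rel M S \<longleftrightarrow> (\<forall>x\<in>S. \<forall>xs ys y. (\<forall>i. xs i \<in> S \<and> ys i \<in> M (xs i)) \<and>
       xs \<longlonglongrightarrow> x \<and> ys \<longlonglongrightarrow> y \<longrightarrow> y \<in> M x)"

definition locally_bounded_rel :: "('a::metric_space \<Rightarrow> 'b::metric_space set) \<Rightarrow> 'a set \<Rightarrow> bool" where
  "locally_bounded_rel M S \<longleftrightarrow>
     (\<forall>x\<in>S. \<exists>U. open U \<and> x \<in> U \<and> bounded (\<Union>z\<in>U \<inter> S. M z))"

definition dom_sv :: "('a \<Rightarrow> 'b set) \<Rightarrow> 'a set" where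
  "dom_sv M = {x. M x \<noteq> {}}"

definition tangent_cone :: "'a::real_normed_vector set \<Rightarrow> 'a \<Rightarrow> 'a set" where
  "tangent_cone S x = {v. \<exists>\<tau> w. (\<forall>i. \<tau> i > 0 \<and> x + \<tau> i *\<^sub>R w i \<in> S) \<and>
                            \<tau> \<longlonglongrightarrow> 0 \<and> w \<longlonglongrightarrow> v}"

definition hybrid_basic_conditions ::
  "'a::euclidean_space set \<Rightarrow> ('a \<Rightarrow> 'a set) \<Rightarrow> 'a set \<Rightarrow> ('a \<Rightarrow> 'a set) \<Rightarrow> bool" where
  "hybrid_basic_conditions C F D G \<longleftrightarrow>
     closed C \<and> closed D \<and>
     osc_rel F C \<and> locally_bounded_rel F C \<and> C \<subseteq> dom_sv F \<and> (\<forall>x\<in>C. convex (F x)) \<and>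
     osc_rel G D \<and> locally_bounded_rel G D \<and> D \<subseteq> dom_sv G"

definition hybrid_time_domain :: "(real \<times> nat) set \<Rightarrow> bool" where
  "hybrid_time_domain E \<longleftrightarrow> E \<noteq> {} \<and>
     (\<forall>(T, J)\<in>E. \<exists>t :: nat \<Rightarrow> real. t 0 = 0 \<and> (\<forall>j\<le>J. t j \<le> t (Suc j)) \<and>
        E \<inter> ({0..T} \<times> {0..J}) = (\<Union>j\<le>J. {t j..t (Suc j)} \<times> {j}))"

definition time_slice :: "(real \<times> nat) set \<Rightarrow> nat \<Rightarrow> real set" where
  "time_slice E j = {t. (t, j) \<in> E}"

definition abs_continuous_on :: "real set \<Rightarrow> (real \<Rightarrow> 'a::real_normed_vector) \<Rightarrow> bool" where
  "abs_continuous_on S f \<longleftrightarrow>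
     (\<forall>\<epsilon>>0. \<exists>\<delta>>0. \<forall>(n::nat) (a::nat \<Rightarrow> real) b.
        (\<forall>k<n. a k \<le> b k \<and> {a k..b k} \<subseteq> S) \<and>
        (\<forall>k<n. \<forall>l<n. k \<noteq> l \<longrightarrow> {a k<..<b k} \<inter> {a l<..<b l} = {}) \<and>
        (\<Sum>k<n. b k - a k) < \<delta> \<longrightarrow> (\<Sum>k<n. norm (f (b k) - f (a k))) < \<epsilon>)"

definition locally_abs_continuous_on :: "real set \<Rightarrow> (real \<Rightarrow> 'a::real_normed_vector) \<Rightarrow> bool" where
  "locally_abs_continuous_on I f \<longleftrightarrow> (\<forall>a b. {a..b} \<subseteq> I \<longrightarrow> abs_continuous_on {a..b} f)"

text \<open>A solution is a pair (E, phi) of a hybrid time domain E and a function phi whose values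
  are relevant only on E.\<close>
definition is_solution ::
  "'a::euclidean_space set \<Rightarrow> ('a \<Rightarrow> 'a set) \<Rightarrow> 'a set \<Rightarrow> ('a \<Rightarrow> 'a set) \<Rightarrow>
   (real \<times> nat) set \<Rightarrow> (real \<times> nat \<Rightarrow> 'a) \<Rightarrow> bool" where
  "is_solution C F D G E \<phi> \<longleftrightarrow>
     hybrid_time_domain E \<and>
     (\<forall>j. locally_abs_continuous_on (time_slice E j) (\<lambda>t. \<phi> (t, j))) \<and>
     \<phi> (0, 0) \<in> C \<union> D \<and>
     (\<forall>j. interior (time_slice E j) \<noteq> {} \<longrightarrow>
        (\<forall>t\<in>interior (time_slice E j). \<phi> (t, j) \<in> C) \<and>
        (AE t in lebesgue. t \<in> time_slice E j \<longrightarrow>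
           (\<exists>v. ((\<lambda>s. \<phi> (s, j)) has_vector_derivative v) (at t) \<and> v \<in> F (\<phi> (t, j))))) \<and>
     (\<forall>t j. (t, j) \<in> E \<and> (t, Suc j) \<in> E \<longrightarrow> \<phi> (t, j) \<in> D \<and> \<phi> (t, Suc j) \<in> G (\<phi> (t, j)))"

definition is_maximal_solution ::
  "'a::euclidean_space set \<Rightarrow> ('a \<Rightarrow> 'a set) \<Rightarrow> 'a set \<Rightarrow> ('a \<Rightarrow> 'a set) \<Rightarrow>
   (real \<times> nat) set \<Rightarrow> (real \<times> nat \<Rightarrow> 'a) \<Rightarrow> bool" where
  "is_maximal_solution C F D G E \<phi> \<longleftrightarrow>
     is_solution C F D G E \<phi> \<and>
     \<not> (\<exists>E' \<psi>. is_solution C F D G E' \<psi> \<and> E \<subset> E' \<and> (\<forall>p\<in>E. \<psi> p = \<phi> p))"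

definition t_complete :: "(real \<times> nat) set \<Rightarrow> bool" where
  "t_complete E \<longleftrightarrow> (\<forall>T. \<exists>(t, j)\<in>E. t \<ge> T)"

definition bounded_arc :: "(real \<times> nat) set \<Rightarrow> (real \<times> nat \<Rightarrow> 'a::real_normed_vector) \<Rightarrow> bool" where
  "bounded_arc E \<phi> \<longleftrightarrow> (\<exists>M. \<forall>p\<in>E. norm (\<phi> p) \<le> M)"

definition jump_image :: "'a set \<Rightarrow> ('a \<Rightarrow> 'a set) \<Rightarrow> 'a set" where
  "jump_image D G = (\<Union>x\<in>D. G x)"

definition setA :: "'a::euclidean_space set \<Rightarrow> 'a set \<Rightarrow> ('a \<Rightarrow> 'a set) \<Rightarrow> ('a \<times> 'a) set" where
  "setA C D G = {(x1, x2). x1 \<in> C \<union> D \<union> jump_image D G \<and> x2 \<in> C \<union> D \<union> jump_image D G \<and>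
      (x1 = x2 \<or> (x2 \<in> D \<and> x1 \<in> G x2) \<or> (x1 \<in> D \<and> x2 \<in> G x1))}"

definition rhoA :: "'a::euclidean_space set \<Rightarrow> 'a set \<Rightarrow> ('a \<Rightarrow> 'a set) \<Rightarrow> 'a \<Rightarrow> 'a \<Rightarrow> real" where
  "rhoA C D G x y = infdist (x, y) (setA C D G)"

definition stable_rho ::
  "'a::euclidean_space set \<Rightarrow> ('a \<Rightarrow> 'a set) \<Rightarrow> 'a set \<Rightarrow> ('a \<Rightarrow> 'a set) \<Rightarrow>
   (real \<times> nat) set \<Rightarrow> (real \<times> nat \<Rightarrow> 'a) \<Rightarrow> bool" where
  "stable_rho C F D G Es \<phi>s \<longleftrightarrow>
     (\<forall>\<epsilon>>0. \<exists>\<delta>>0. \<forall>E \<phi>. is_maximal_solution C F D G E \<phi> \<and>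
         rhoA C D G (\<phi>s (0, 0)) (\<phi> (0, 0)) < \<delta> \<longrightarrow>
         (\<forall>(t, j)\<in>Es. \<exists>j'. (t, j') \<in> E \<and> rhoA C D G (\<phi>s (t, j)) (\<phi> (t, j')) < \<epsilon>) \<and>
         (\<forall>(t, j')\<in>E. \<exists>j. (t, j) \<in> Es \<and> rhoA C D G (\<phi>s (t, j)) (\<phi> (t, j')) < \<epsilon>))"

definition asymptotically_stable_rho ::
  "'a::euclidean_space set \<Rightarrow> ('a \<Rightarrow> 'a set) \<Rightarrow> 'a set \<Rightarrow> ('a \<Rightarrow> 'a set) \<Rightarrow>
   (real \<times> nat) set \<Rightarrow> (real \<times> nat \<Rightarrow> 'a) \<Rightarrow> bool" where
  "asymptotically_stable_rho C F D G Es \<phi>s \<longleftrightarrow> stable_rho C F D G Es \<phi>s \<and>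
     (\<exists>r>0. \<forall>\<epsilon>>0. \<forall>E \<phi>. is_maximal_solution C F D G E \<phi> \<and>
         rhoA C D G (\<phi>s (0, 0)) (\<phi> (0, 0)) < r \<longrightarrow>
         (\<exists>T\<ge>0.
           (\<forall>(t, j)\<in>Es. t \<ge> T \<longrightarrow> (\<exists>j'. (t, j') \<in> E \<and> rhoA C D G (\<phi>s (t, j)) (\<phi> (t, j')) < \<epsilon>)) \<and>
           (\<forall>(t, j')\<in>E. t \<ge> T \<longrightarrow> (\<exists>j. (t, j) \<in> Es \<and> rhoA C D G (\<phi>s (t, j)) (\<phi> (t, j')) < \<epsilon>))))"

definition stable_graphical ::
  "'a::euclidean_space set \<Rightarrow> ('a \<Rightarrow> 'a set) \<Rightarrow> 'a set \<Rightarrow> ('a \<Rightarrow> 'a set) \<Rightarrow>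
   (real \<times> nat) set \<Rightarrow> (real \<times> nat \<Rightarrow> 'a) \<Rightarrow> bool" where
  "stable_graphical C F D G Es \<phi>s \<longleftrightarrow>
     (\<forall>\<epsilon>>0. \<exists>\<delta>>0. \<forall>E \<phi>. is_maximal_solution C F D G E \<phi> \<and>
         norm (\<phi>s (0, 0) - \<phi> (0, 0)) < \<delta> \<longrightarrow>
         (\<forall>(t, j)\<in>Es. \<exists>(t', j')\<in>E. \<bar>t - t'\<bar> < \<epsilon> \<and> norm (\<phi>s (t, j) - \<phi> (t', j')) < \<epsilon>) \<and>
         (\<forall>(t', j')\<in>E. \<exists>(t, j)\<in>Es. \<bar>t - t'\<bar> < \<epsilon> \<and> norm (\<phi>s (t, j) - \<phi> (t', j')) < \<epsilon>))"

definition asymptotically_stable_graphical ::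
  "'a::euclidean_space set \<Rightarrow> ('a \<Rightarrow> 'a set) \<Rightarrow> 'a set \<Rightarrow> ('a \<Rightarrow> 'a set) \<Rightarrow>
   (real \<times> nat) set \<Rightarrow> (real \<times> nat \<Rightarrow> 'a) \<Rightarrow> bool" where
  "asymptotically_stable_graphical C F D G Es \<phi>s \<longleftrightarrow> stable_graphical C F D G Es \<phi>s \<and>
     (\<exists>r>0. \<forall>\<epsilon>>0. \<forall>E \<phi>. is_maximal_solution C F D G E \<phi> \<and>
         norm (\<phi>s (0, 0) - \<phi> (0, 0)) < r \<longrightarrow>
         (\<exists>T\<ge>0.
           (\<forall>(t, j)\<in>Es. t \<ge> T \<longrightarrow>
              (\<exists>(t', j')\<in>E. \<bar>t - t'\<bar> < \<epsilon> \<and> norm (\<phi>s (t, j) - \<phi> (t', j')) < \<epsilon>)) \<and>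
           (\<forall>(t', j')\<in>E. t' \<ge> T \<longrightarrow>
              (\<exists>(t, j)\<in>Es. \<bar>t - t'\<bar> < \<epsilon> \<and> norm (\<phi>s (t, j) - \<phi> (t', j')) < \<epsilon>))))"

end

theory Submission
  imports Defs
begin

lemma straddle_real:
  fixes g :: "real \<Rightarrow> real"
  assumes "(g has_real_derivative d) (at t)" "e > 0"
  obtains r where "r > 0" "\<And>u v. u \<le> t \<Longrightarrow> t \<le> v \<Longrightarrow> v - u < r \<Longrightarrow>
      g v - g u \<le> (d + e) * (v - u)"
proof -
  from assms(1) have "(g has_derivative (\<lambda>x. x * d)) (at t)"
    by (simp add: has_field_derivative_def mult.commute[of _ d])
  then obtain r where r: "r > 0" and
    H: "\<And>y. norm (y - t) < r \<Longrightarrow> norm (g y - g t - (y - t) * d) \<le> e * norm (y - t)"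
    using assms(2) unfolding has_derivative_at_alt by blast
  show ?thesis
  proof (rule that[OF r])
    fix u v assume uv: "u \<le> t" "t \<le> v" "v - u < r"
    have 1: "\<bar>g v - g t - (v - t) * d\<bar> \<le> e * (v - t)"
      using H[of v] uv by simp
    have 2: "\<bar>g u - g t - (u - t) * d\<bar> \<le> e * (t - u)"
      using H[of u] uv by simp
    show "g v - g u \<le> (d + e) * (v - u)"
      using 1 2 by (simp add: algebra_simps abs_le_iff)
  qed
qed

lemma ac_deriv_bound:
  fixes g :: "real \<Rightarrow> real"
  assumes ab: "a \<le> b" and ac: "abs_continuous_on {a..b} g"
    and N: "negligible N"
    and der: "\<And>t. t \<in> {a..b} \<Longrightarrow> t \<notin> N \<Longrightarrow> \<exists>d. (g has_real_derivative d) (at t) \<and> d \<le> c"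
  shows "g b - g a \<le> c * (b - a)"
proof -
  have main: "g b - g a \<le> (c + e) * (b - a) + 2 * e" if e: "e > 0" for e
  proof -
    obtain \<delta>0 where d0: "\<delta>0 > 0" and
      AC: "\<And>n (aa::nat\<Rightarrow>real) bb. (\<forall>k<n. aa k \<le> bb k \<and> {aa k..bb k} \<subseteq> {a..b}) \<Longrightarrow>
        (\<forall>k<n. \<forall>l<n. k \<noteq> l \<longrightarrow> {aa k<..<bb k} \<inter> {aa l<..<bb l} = {}) \<Longrightarrow>
        (\<Sum>k<n. bb k - aa k) < \<delta>0 \<Longrightarrow> (\<Sum>k<n. norm (g (bb k) - g (aa k))) < e"
      using ac e unfolding abs_continuous_on_def by meson
    define \<delta> where "\<delta> = min \<delta>0 (e / (\<bar>c + e\<bar> + 1))"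
    have dpos: "\<delta> > 0" using d0 e by (simp add: \<delta>_def)
    have dle: "\<delta> \<le> \<delta>0" by (simp add: \<delta>_def)
    have dle2: "\<bar>c + e\<bar> * \<delta> \<le> e"
    proof -
      have "\<delta> \<le> e / (\<bar>c + e\<bar> + 1)" by (simp add: \<delta>_def)
      hence "\<delta> * (\<bar>c + e\<bar> + 1) \<le> e" by (simp add: pos_le_divide_eq add_pos_nonneg)
      thus ?thesis using dpos by (simp add: algebra_simps)
    qed
    have "(indicat_real N has_integral 0) {a..b}" using N unfolding negligible by blast
    then obtain \<gamma>1 where g1: "gauge \<gamma>1" and
      G1: "\<And>\<D>. \<D> tagged_division_of {a..b} \<Longrightarrow> \<gamma>1 fine \<D> \<Longrightarrow>
         norm ((\<Sum>(x,k)\<in>\<D>. Henstock_Kurzweil_Integration.content k *\<^sub>R indicat_real N x) - 0) < \<delta>"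
      using dpos unfolding has_integral_real by meson
    have "\<forall>t. \<exists>r. r > 0 \<and> (t \<in> {a..b} \<and> t \<notin> N \<longrightarrow> (\<forall>u v. u \<le> t \<longrightarrow> t \<le> v \<longrightarrow> v - u < r \<longrightarrow>
      g v - g u \<le> (c + e) * (v - u)))"
    proof
      fix t
      show "\<exists>r. r > 0 \<and> (t \<in> {a..b} \<and> t \<notin> N \<longrightarrow> (\<forall>u v. u \<le> t \<longrightarrow> t \<le> v \<longrightarrow> v - u < r \<longrightarrow>
        g v - g u \<le> (c + e) * (v - u)))"
      proof (cases "t \<in> {a..b} \<and> t \<notin> N")
        case True
        then obtain d where dd: "(g has_real_derivative d) (at t)" "d \<le> c" using der by blast
        obtain r where r: "r > 0" "\<And>u v. u \<le> t \<Longrightarrow> t \<le> v \<Longrightarrow> v - u < r \<Longrightarrow>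
          g v - g u \<le> (d + e) * (v - u)" using straddle_real[OF dd(1) e] by blast
        have "g v - g u \<le> (c + e) * (v - u)" if "u \<le> t" "t \<le> v" "v - u < r" for u v
        proof -
          have "g v - g u \<le> (d + e) * (v - u)" using r(2) that by blast
          also have "\<dots> \<le> (c + e) * (v - u)" using dd(2) that by (intro mult_right_mono) auto
          finally show ?thesis .
        qed
        then show ?thesis using r(1) by blast
      qed (auto intro: exI[of _ 1])
    qed
    then obtain R where R: "\<And>t. R t > 0" and
      R2: "\<And>t u v. t \<in> {a..b} \<Longrightarrow> t \<notin> N \<Longrightarrow> u \<le> t \<Longrightarrow> t \<le> v \<Longrightarrow> v - u < R t \<Longrightarrow>
        g v - g u \<le> (c + e) * (v - u)"
      by metis
    define \<gamma>2 where "\<gamma>2 t = ball t (R t / 2)" for t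
    have g2: "gauge \<gamma>2" unfolding gauge_def \<gamma>2_def using R by auto
    obtain \<D> where D: "\<D> tagged_division_of {a..b}" "(\<lambda>x. \<gamma>1 x \<inter> \<gamma>2 x) fine \<D>"
      using fine_division_exists_real[OF gauge_Int[OF g1 g2]] by blast
    have f1: "\<gamma>1 fine \<D>" and f2: "\<gamma>2 fine \<D>" using D(2) by (auto simp: fine_Int)
    have fin: "finite \<D>" using D(1) by blast
    have Kint: "\<And>x K. (x,K) \<in> \<D> \<Longrightarrow> \<exists>u v. K = {u..v} \<and> u \<le> v \<and> x \<in> K \<and> K \<subseteq> {a..b}"
    proof -
      fix x K assume xK: "(x,K) \<in> \<D>"
      obtain u v where K: "K = cbox u v" using tagged_division_ofD(4)[OF D(1) xK] by blast
      have "x \<in> K" using tagged_division_ofD(2)[OF D(1) xK] .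
      moreover have "K \<subseteq> {a..b}" using tagged_division_ofD(3)[OF D(1) xK] .
      ultimately show "\<exists>u v. K = {u..v} \<and> u \<le> v \<and> x \<in> K \<and> K \<subseteq> {a..b}"
        using K by (auto intro!: exI[of _ u] exI[of _ v])
    qed
    define D1 where "D1 = {p \<in> \<D>. fst p \<in> N}"
    define D2 where "D2 = {p \<in> \<D>. fst p \<notin> N}"
    have fD1: "finite D1" and fD2: "finite D2" using fin by (auto simp: D1_def D2_def)
    have disj: "D1 \<inter> D2 = {}" and un: "D1 \<union> D2 = \<D>" by (auto simp: D1_def D2_def)
    define h where "h = (\<lambda>(x::real,K::real set). g (Sup K) - g (Inf K))"
    define cn where "cn = (\<lambda>(x::real,K::real set). Henstock_Kurzweil_Integration.content K)"
    have tel: "sum h \<D> = g b - g a"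
      using additive_tagged_division_1[OF ab D(1), of g] by (simp add: h_def)
    have ctot: "sum cn \<D> = b - a"
      using additive_content_tagged_division[of \<D> a b] D(1) ab by (simp add: cn_def)
    have cnn: "\<And>p. p \<in> \<D> \<Longrightarrow> cn p \<ge> 0" by (auto simp: cn_def)
    have hD2: "h p \<le> (c + e) * cn p" if p: "p \<in> D2" for p
    proof -
      obtain x K where pxK: "p = (x,K)" by (cases p)
      have xK: "(x,K) \<in> \<D>" "x \<notin> N" using p pxK by (auto simp: D2_def)
      obtain u v where uv: "K = {u..v}" "u \<le> v" "x \<in> K" "K \<subseteq> {a..b}" using Kint[OF xK(1)] by blast
      have "K \<subseteq> \<gamma>2 x" using f2 xK(1) unfolding fine_def by blast
      hence "u \<in> ball x (R x / 2)" "v \<in> ball x (R x / 2)" using uv unfolding \<gamma>2_def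
        by (auto simp del: mem_ball)
      hence "v - u < R x" using uv by (auto simp: dist_real_def)
      hence "g v - g u \<le> (c + e) * (v - u)" using R2[of x u v] uv xK by auto
      thus ?thesis using uv pxK by (simp add: h_def cn_def)
    qed
    have cD1: "sum cn D1 < \<delta>"
    proof -
      have "(\<Sum>(x,k)\<in>\<D>. Henstock_Kurzweil_Integration.content k *\<^sub>R indicat_real N x) = sum cn D1"
      proof -
        have "(\<Sum>(x,k)\<in>\<D>. Henstock_Kurzweil_Integration.content k *\<^sub>R indicat_real N x) = (\<Sum>p\<in>\<D>. if fst p \<in> N then cn p else 0)"
          by (intro sum.cong) (auto simp: cn_def indicator_def)
        also have "\<dots> = sum cn D1" unfolding D1_def by (simp add: sum.inter_filter[OF fin])
        finally show ?thesis .
      qed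
      thus ?thesis using G1[OF D(1) f1] by simp
    qed
    have hD1: "sum h D1 \<le> e"
    proof -
      obtain f where f: "bij_betw f {..<card D1} D1" using bij_betw_from_nat_into_finite[OF fD1] by blast
      define n where "n = card D1"
      define aa where "aa k = Inf (snd (f k))" for k
      define bb where "bb k = Sup (snd (f k))" for k
      have fk: "\<And>k. k < n \<Longrightarrow> f k \<in> \<D>" using f unfolding n_def bij_betw_def D1_def by auto
      have sk: "\<And>k. k < n \<Longrightarrow> snd (f k) = {aa k..bb k} \<and> aa k \<le> bb k \<and> {aa k..bb k} \<subseteq> {a..b}"
      proof -
        fix k assume k: "k < n"
        obtain x K where xK: "f k = (x,K)" by (cases "f k")
        obtain u v where uv: "K = {u..v}" "u \<le> v" "x \<in> K" "K \<subseteq> {a..b}" using Kint fk[OF k] xK by metis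
        show "snd (f k) = {aa k..bb k} \<and> aa k \<le> bb k \<and> {aa k..bb k} \<subseteq> {a..b}"
          using uv xK by (simp add: aa_def bb_def)
      qed
      have c1: "\<forall>k<n. aa k \<le> bb k \<and> {aa k..bb k} \<subseteq> {a..b}" using sk by blast
      have c2: "\<forall>k<n. \<forall>l<n. k \<noteq> l \<longrightarrow> {aa k<..<bb k} \<inter> {aa l<..<bb l} = {}"
      proof (intro allI impI)
        fix k l assume kl: "k < n" "l < n" "k \<noteq> l"
        have "f k \<noteq> f l" using f kl unfolding bij_betw_def inj_on_def n_def by auto
        hence "interior (snd (f k)) \<inter> interior (snd (f l)) = {}"
          using tagged_division_ofD(5)[OF D(1), of "fst (f k)" "snd (f k)" "fst (f l)" "snd (f l)"] fk kl
          by auto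
        thus "{aa k<..<bb k} \<inter> {aa l<..<bb l} = {}" using sk kl by auto
      qed
      have sumc: "(\<Sum>k<n. bb k - aa k) = sum cn D1"
      proof -
        have "(\<Sum>k<n. bb k - aa k) = (\<Sum>k<n. cn (f k))"
        proof (intro sum.cong refl)
          fix k assume "k \<in> {..<n}"
          hence "snd (f k) = {aa k..bb k}" "aa k \<le> bb k" using sk by auto
          moreover have "cn (f k) = Henstock_Kurzweil_Integration.content (snd (f k))"
            by (cases "f k") (simp add: cn_def)
          ultimately show "bb k - aa k = cn (f k)" by simp
        qed
        also have "\<dots> = sum cn D1" using sum.reindex_bij_betw[OF f, of cn] n_def by simp
        finally show ?thesis .
      qed
      have c3: "(\<Sum>k<n. bb k - aa k) < \<delta>0" using sumc cD1 dle by simp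
      have "(\<Sum>k<n. norm (g (bb k) - g (aa k))) < e" using AC[OF c1 c2 c3] .
      moreover have "sum h D1 = (\<Sum>k<n. g (bb k) - g (aa k))"
      proof -
        have "(\<Sum>k<n. g (bb k) - g (aa k)) = (\<Sum>k<n. h (f k))"
          by (intro sum.cong refl) (use sk in \<open>auto simp: h_def aa_def bb_def split: prod.splits\<close>)
        also have "\<dots> = sum h D1" using sum.reindex_bij_betw[OF f, of h] n_def by simp
        finally show ?thesis by simp
      qed
      moreover have "(\<Sum>k<n. g (bb k) - g (aa k)) \<le> (\<Sum>k<n. norm (g (bb k) - g (aa k)))"
        by (intro sum_mono) auto
      ultimately show ?thesis by linarith
    qed
    have "g b - g a = sum h D1 + sum h D2" using tel sum.union_disjoint[OF fD1 fD2 disj, of h] un by simp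
    also have "\<dots> \<le> e + (c + e) * sum cn D2"
      using hD1 sum_mono[of D2 h "\<lambda>p. (c+e) * cn p", OF hD2] by (simp add: sum_distrib_left)
    also have "(c + e) * sum cn D2 = (c + e) * (b - a) - (c + e) * sum cn D1"
    proof -
      have "sum cn D2 = (b - a) - sum cn D1"
        using ctot sum.union_disjoint[OF fD1 fD2 disj, of cn] un by simp
      thus ?thesis by (simp only: right_diff_distrib)
    qed
    also have "- ((c + e) * sum cn D1) \<le> \<bar>c + e\<bar> * \<delta>"
    proof -
      have s0: "sum cn D1 \<ge> 0" using cnn by (intro sum_nonneg) (auto simp: D1_def)
      have "- ((c + e) * sum cn D1) \<le> \<bar>c + e\<bar> * sum cn D1"
        using s0 by (metis abs_ge_minus_self abs_mult abs_of_nonneg mult_minus_left)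
      also have "\<dots> \<le> \<bar>c + e\<bar> * \<delta>" using cD1 by (intro mult_left_mono) auto
      finally show ?thesis .
    qed
    ultimately show ?thesis using dle2 by linarith
  qed
  show ?thesis
  proof (rule ccontr)
    assume "\<not> ?thesis"
    hence pos: "g b - g a - c * (b - a) > 0" by simp
    define e where "e = (g b - g a - c * (b - a)) / (b - a + 3)"
    have e: "e > 0" using pos ab by (simp add: e_def)
    have "e * (b - a + 3) = g b - g a - c * (b - a)" using ab by (simp add: e_def)
    hence "(c + e) * (b - a) + 2 * e < g b - g a" using e by (simp add: algebra_simps)
    thus False using main[OF e] by linarith
  qed
qed

lemma abs_continuous_on_inner:
  fixes f :: "real \<Rightarrow> 'a::euclidean_space"
  assumes "abs_continuous_on S f"
  shows "abs_continuous_on S (\<lambda>t. inner w (f t))"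
  unfolding abs_continuous_on_def
proof (intro allI impI)
  fix e :: real assume e: "e > 0"
  define e' where "e' = e / (norm w + 1)"
  have e': "e' > 0" using e unfolding e'_def by (intro divide_pos_pos) (auto intro: add_nonneg_pos)
  obtain d where d: "d > 0" and H: "\<And>n (aa::nat\<Rightarrow>real) bb. (\<forall>k<n. aa k \<le> bb k \<and> {aa k..bb k} \<subseteq> S) \<and>
        (\<forall>k<n. \<forall>l<n. k \<noteq> l \<longrightarrow> {aa k<..<bb k} \<inter> {aa l<..<bb l} = {}) \<and>
        (\<Sum>k<n. bb k - aa k) < d \<longrightarrow> (\<Sum>k<n. norm (f (bb k) - f (aa k))) < e'"
    using assms e' unfolding abs_continuous_on_def by meson
  show "\<exists>d>0. \<forall>n (aa::nat\<Rightarrow>real) bb. (\<forall>k<n. aa k \<le> bb k \<and> {aa k..bb k} \<subseteq> S) \<and>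
        (\<forall>k<n. \<forall>l<n. k \<noteq> l \<longrightarrow> {aa k<..<bb k} \<inter> {aa l<..<bb l} = {}) \<and>
        (\<Sum>k<n. bb k - aa k) < d \<longrightarrow> (\<Sum>k<n. norm (inner w (f (bb k)) - inner w (f (aa k)))) < e"
  proof (intro exI[of _ d] conjI d allI impI)
    fix n and aa bb :: "nat \<Rightarrow> real"
    assume A: "(\<forall>k<n. aa k \<le> bb k \<and> {aa k..bb k} \<subseteq> S) \<and>
        (\<forall>k<n. \<forall>l<n. k \<noteq> l \<longrightarrow> {aa k<..<bb k} \<inter> {aa l<..<bb l} = {}) \<and>
        (\<Sum>k<n. bb k - aa k) < d"
    have "(\<Sum>k<n. norm (inner w (f (bb k)) - inner w (f (aa k)))) \<le> (\<Sum>k<n. norm w * norm (f (bb k) - f (aa k)))"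
    proof (intro sum_mono)
      fix k
      have "norm (inner w (f (bb k)) - inner w (f (aa k))) = \<bar>inner w (f (bb k) - f (aa k))\<bar>"
        by (simp add: inner_diff_right)
      also have "\<dots> \<le> norm w * norm (f (bb k) - f (aa k))" by (rule Cauchy_Schwarz_ineq2)
      finally show "norm (inner w (f (bb k)) - inner w (f (aa k))) \<le> norm w * norm (f (bb k) - f (aa k))" .
    qed
    also have "\<dots> = norm w * (\<Sum>k<n. norm (f (bb k) - f (aa k)))" by (simp add: sum_distrib_left)
    also have "\<dots> \<le> norm w * e'" using H[of n aa bb] A by (intro mult_left_mono) auto
    also have "\<dots> < e"
    proof -
      have "norm w * e' = e * (norm w / (norm w + 1))" by (simp add: e'_def)
      also have "\<dots> < e * 1"
      proof -
        have p: "norm w + 1 > 0" by (simp add: add_nonneg_pos)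
        have "norm w / (norm w + 1) < 1" using p by (simp add: divide_less_eq)
        thus ?thesis using e by (intro mult_strict_left_mono) auto
      qed
      finally show ?thesis by simp
    qed
    finally show "(\<Sum>k<n. norm (inner w (f (bb k)) - inner w (f (aa k)))) < e" .
  qed
qed

lemma ac_mean_value:
  fixes f :: "real \<Rightarrow> 'a::euclidean_space"
  assumes ab: "a < b" and ac: "abs_continuous_on {a..b} f"
    and N: "negligible N" and S: "closed S" "convex S"
    and der: "\<And>t. t \<in> {a..b} \<Longrightarrow> t \<notin> N \<Longrightarrow> \<exists>v. (f has_vector_derivative v) (at t) \<and> v \<in> S"
  shows "(f b - f a) /\<^sub>R (b - a) \<in> S"
proof (rule ccontr)
  assume nz: "(f b - f a) /\<^sub>R (b - a) \<notin> S"
  obtain w c where wc: "inner w ((f b - f a) /\<^sub>R (b - a)) < c" "\<And>x. x \<in> S \<Longrightarrow> inner w x > c"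
    using separating_hyperplane_closed_point[OF S(2) S(1) nz] by blast
  define g where "g t = inner (- w) (f t)" for t
  have acg: "abs_continuous_on {a..b} g" unfolding g_def by (rule abs_continuous_on_inner[OF ac])
  have "g b - g a \<le> (- c) * (b - a)"
  proof (rule ac_deriv_bound[OF _ acg N])
    show "a \<le> b" using ab by simp
    fix t assume t: "t \<in> {a..b}" "t \<notin> N"
    obtain v where v: "(f has_vector_derivative v) (at t)" "v \<in> S" using der[OF t] by blast
    have "(g has_vector_derivative inner (- w) v) (at t)"
      unfolding g_def by (rule bounded_linear.has_vector_derivative[OF bounded_linear_inner_right v(1)])
    hence "(g has_real_derivative inner (- w) v) (at t)"
      by (simp add: has_real_derivative_iff_has_vector_derivative)
    moreover have "inner (- w) v \<le> - c" using wc(2)[OF v(2)] by simp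
    ultimately show "\<exists>d. (g has_real_derivative d) (at t) \<and> d \<le> - c" by blast
  qed
  hence "inner w (f b - f a) \<ge> c * (b - a)" by (simp add: g_def inner_diff_right algebra_simps)
  hence "inner w ((f b - f a) /\<^sub>R (b - a)) \<ge> c" using ab
    by (simp add: inner_scaleR_right divide_simps mult.commute)
  thus False using wc(1) by simp
qed

lemma htd_rep:
  assumes "hybrid_time_domain E" "(T, J) \<in> E"
  obtains s where "s 0 = 0" "\<forall>j\<le>J. s j \<le> s (Suc j)"
    "E \<inter> ({0..T} \<times> {0..J}) = (\<Union>j\<le>J. {s j..s (Suc j)} \<times> {j})"
proof -
  have "\<forall>(T, J)\<in>E. \<exists>t :: nat \<Rightarrow> real. t 0 = 0 \<and> (\<forall>j\<le>J. t j \<le> t (Suc j)) \<and>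
        E \<inter> ({0..T} \<times> {0..J}) = (\<Union>j\<le>J. {t j..t (Suc j)} \<times> {j})"
    using assms(1) unfolding hybrid_time_domain_def by (rule conjunct2)
  from bspec[OF this assms(2)] have "\<exists>t :: nat \<Rightarrow> real. t 0 = 0 \<and> (\<forall>j\<le>J. t j \<le> t (Suc j)) \<and>
        E \<inter> ({0..T} \<times> {0..J}) = (\<Union>j\<le>J. {t j..t (Suc j)} \<times> {j})" by (simp only: case_prod_conv)
  then obtain s where "s 0 = 0 \<and> (\<forall>j\<le>J. s j \<le> s (Suc j)) \<and>
        E \<inter> ({0..T} \<times> {0..J}) = (\<Union>j\<le>J. {s j..s (Suc j)} \<times> {j})" by (rule exE)
  thus ?thesis using that by (elim conjE)
qed

lemma mono_upto:
  assumes "\<forall>j\<le>J. s j \<le> (s (Suc j) :: real)" "i \<le> k" "k \<le> Suc J"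
  shows "s i \<le> s k"
  using assms(2,3)
proof (induction k)
  case 0 then show ?case by simp
next
  case (Suc k)
  show ?case
  proof (cases "i = Suc k")
    case True then show ?thesis by simp
  next
    case False
    hence "i \<le> k" using Suc.prems by simp
    hence "s i \<le> s k" using Suc by simp
    also have "s k \<le> s (Suc k)" using assms(1) Suc.prems by simp
    finally show ?thesis .
  qed
qed

lemma rep_memI:
  assumes rep: "E \<inter> ({0..T} \<times> {0..J}) = (\<Union>j\<le>J. {s j..s (Suc j)} \<times> {j})"
    and "i \<le> J" "s i \<le> x" "x \<le> s (Suc i)"
  shows "(x, i) \<in> E" "0 \<le> x" "x \<le> T"
proof -
  have "(x, i) \<in> (\<Union>j\<le>J. {s j..s (Suc j)} \<times> {j})" using assms(2-4) by (intro UN_I[of i]) auto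
  hence "(x, i) \<in> E \<inter> ({0..T} \<times> {0..J})" by (subst rep)
  thus "(x, i) \<in> E" "0 \<le> x" "x \<le> T" by auto
qed

lemma rep_memD:
  assumes rep: "E \<inter> ({0..T} \<times> {0..J}) = (\<Union>j\<le>J. {s j..s (Suc j)} \<times> {j})"
    and "(x, i) \<in> E" "0 \<le> x" "x \<le> T" "i \<le> J"
  shows "s i \<le> x" "x \<le> s (Suc i)"
proof -
  have "(x, i) \<in> E \<inter> ({0..T} \<times> {0..J})" using assms(2-5) by (intro IntI SigmaI) auto
  hence "(x, i) \<in> (\<Union>j\<le>J. {s j..s (Suc j)} \<times> {j})" by (subst rep[symmetric])
  then obtain k where k: "k \<in> {..J}" "(x, i) \<in> {s k..s (Suc k)} \<times> {k}" by (rule UN_E)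
  from k(2) have "k = i" "x \<in> {s k..s (Suc k)}" by (auto simp only: mem_Sigma_iff singleton_iff)
  thus "s i \<le> x" "x \<le> s (Suc i)" by auto
qed

lemma htd_nonneg:
  assumes "hybrid_time_domain E" "(t, j) \<in> E"
  shows "0 \<le> t"
proof -
  obtain s where s: "s 0 = 0" "\<forall>i\<le>j. s i \<le> s (Suc i)"
    "E \<inter> ({0..t} \<times> {0..j}) = (\<Union>i\<le>j. {s i..s (Suc i)} \<times> {i})"
    by (rule htd_rep[OF assms])
  have s01: "s 0 \<le> s (Suc 0)" using s(2) by simp
  have "0 \<le> s 0" "s 0 \<le> t" using rep_memI[OF s(3) le0 order_refl s01] by simp_all
  thus ?thesis using s(1) by simp
qed

lemma htd_00:
  assumes "hybrid_time_domain E"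
  shows "(0, 0) \<in> E"
proof -
  obtain T J where TJ: "(T, J) \<in> E" using assms unfolding hybrid_time_domain_def by auto
  obtain s where s: "s 0 = 0" "\<forall>i\<le>J. s i \<le> s (Suc i)"
    "E \<inter> ({0..T} \<times> {0..J}) = (\<Union>i\<le>J. {s i..s (Suc i)} \<times> {i})"
    by (rule htd_rep[OF assms TJ])
  have s01: "s 0 \<le> s (Suc 0)" using s(2) by simp
  show ?thesis using rep_memI(1)[OF s(3) le0 order_refl s01] s(1) by simp
qed

lemma htd_convex:
  assumes "hybrid_time_domain E" "(t1, j) \<in> E" "(t2, j) \<in> E" "t1 \<le> t" "t \<le> t2"
  shows "(t, j) \<in> E"
proof -
  obtain s where s: "s 0 = 0" "\<forall>i\<le>j. s i \<le> s (Suc i)"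
    "E \<inter> ({0..t2} \<times> {0..j}) = (\<Union>i\<le>j. {s i..s (Suc i)} \<times> {i})"
    by (rule htd_rep[OF assms(1,3)])
  have "s j \<le> t1" "t2 \<le> s (Suc j)"
    using rep_memD[OF s(3) assms(2)] rep_memD[OF s(3) assms(3)] htd_nonneg[OF assms(1,2)]
      htd_nonneg[OF assms(1,3)] assms(4,5) by auto
  thus ?thesis using rep_memI(1)[OF s(3), of j t] assms(4,5) by auto
qed

lemma htd_prev:
  assumes "hybrid_time_domain E" "(t, Suc i) \<in> E"
  obtains \<tau> where "\<tau> \<le> t" "(\<tau>, i) \<in> E" "(\<tau>, Suc i) \<in> E"
    "\<And>x. (x, Suc i) \<in> E \<Longrightarrow> \<tau> \<le> x" "\<And>x. (x, i) \<in> E \<Longrightarrow> x \<le> t \<Longrightarrow> x \<le> \<tau>"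
proof -
  obtain s where s: "s 0 = 0" "\<forall>k\<le>Suc i. s k \<le> s (Suc k)"
    "E \<inter> ({0..t} \<times> {0..Suc i}) = (\<Union>k\<le>Suc i. {s k..s (Suc k)} \<times> {k})"
    by (rule htd_rep[OF assms])
  have a: "(s (Suc i), i) \<in> E" using rep_memI[OF s(3), of i "s (Suc i)"] s(2) by auto
  have b: "(s (Suc i), Suc i) \<in> E" "s (Suc i) \<le> t" using rep_memI[OF s(3), of "Suc i" "s (Suc i)"] s(2) by auto
  show ?thesis
  proof (rule that[OF b(2) a b(1)])
    fix x assume x: "(x, Suc i) \<in> E"
    show "s (Suc i) \<le> x"
    proof (cases "x \<le> t")
      case True thus ?thesis using rep_memD(1)[OF s(3) x] htd_nonneg[OF assms(1) x] by auto
    qed (use b in auto)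
  next
    fix x assume x: "(x, i) \<in> E" "x \<le> t"
    show "x \<le> s (Suc i)" using rep_memD(2)[OF s(3) x(1)] htd_nonneg[OF assms(1) x(1)] x(2) by auto
  qed
qed

lemma htd_weird:
  assumes "hybrid_time_domain E" "(t', j') \<in> E" "j < j'"
  obtains \<tau> where "\<tau> \<le> t'" "(\<tau>, j) \<in> E" "(\<tau>, Suc j) \<in> E"
proof -
  obtain s where s: "s 0 = 0" "\<forall>k\<le>j'. s k \<le> s (Suc k)"
    "E \<inter> ({0..t'} \<times> {0..j'}) = (\<Union>k\<le>j'. {s k..s (Suc k)} \<times> {k})"
    by (rule htd_rep[OF assms(1,2)])
  have a: "(s (Suc j), j) \<in> E" using rep_memI[OF s(3), of j "s (Suc j)"] s(2) assms(3) by auto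
  have b: "(s (Suc j), Suc j) \<in> E" "s (Suc j) \<le> t'"
    using rep_memI[OF s(3), of "Suc j" "s (Suc j)"] s(2) assms(3) by auto
  show ?thesis using that[OF b(2) a b(1)] .
qed

definition ordered_htd :: "(real \<times> nat) set \<Rightarrow> bool" where
  "ordered_htd E \<longleftrightarrow> (\<forall>t j t' j'. (t, j) \<in> E \<longrightarrow> (t', j') \<in> E \<longrightarrow> j < j' \<longrightarrow> t \<le> t')"

lemma htd_forward:
  assumes "hybrid_time_domain E" "ordered_htd E" "t_complete E" "(t, j) \<in> E" "\<sigma> > 0"
  shows "(t + \<sigma>, j) \<in> E \<or> (\<exists>\<tau>. t \<le> \<tau> \<and> \<tau> < t + \<sigma> \<and> (\<tau>, j) \<in> E \<and> (\<tau>, Suc j) \<in> E)"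
proof -
  obtain T J where TJ: "(T, J) \<in> E" "T \<ge> t + \<sigma>" using assms(3) unfolding t_complete_def by fast
  consider "J < j" | "J = j" | "j < J" by linarith
  then show ?thesis
  proof cases
    case 1
    hence "T \<le> t" using assms(2,4) TJ(1) unfolding ordered_htd_def by blast
    thus ?thesis using TJ(2) assms(5) by simp
  next
    case 2
    have "(T, j) \<in> E" using TJ(1) 2 by simp
    hence "(t + \<sigma>, j) \<in> E" using htd_convex[OF assms(1,4), of T "t + \<sigma>"] TJ(2) assms(5) by simp
    thus ?thesis by (rule disjI1)
  next
    case 3
    obtain s where s: "s 0 = 0" "\<forall>k\<le>J. s k \<le> s (Suc k)"
      "E \<inter> ({0..T} \<times> {0..J}) = (\<Union>k\<le>J. {s k..s (Suc k)} \<times> {k})"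
      by (rule htd_rep[OF assms(1) TJ(1)])
    have tle: "t \<le> T" using TJ(2) assms(5) by simp
    have tin: "s j \<le> t" "t \<le> s (Suc j)"
      using rep_memD[OF s(3) assms(4) htd_nonneg[OF assms(1,4)] tle] 3 by simp_all
    have jJ: "j \<le> J" "Suc j \<le> J" using 3 by simp_all
    have a: "(s (Suc j), j) \<in> E" using rep_memI(1)[OF s(3) jJ(1), of "s (Suc j)"] s(2) jJ(1) by simp
    have b: "(s (Suc j), Suc j) \<in> E"
      using rep_memI(1)[OF s(3) jJ(2), of "s (Suc j)"] s(2) jJ(2) by simp
    show ?thesis
    proof (cases "s (Suc j) \<ge> t + \<sigma>")
      case True
      have "(t + \<sigma>, j) \<in> E" using htd_convex[OF assms(1,4) a, of "t + \<sigma>"] assms(5) True by simp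
      thus ?thesis by (rule disjI1)
    next
      case False
      hence "t \<le> s (Suc j) \<and> s (Suc j) < t + \<sigma> \<and> (s (Suc j), j) \<in> E \<and> (s (Suc j), Suc j) \<in> E"
        using a b tin by simp
      thus ?thesis by blast
    qed
  qed
qed

lemma ac_imp_continuous:
  fixes f :: "real \<Rightarrow> 'a::real_normed_vector"
  assumes "abs_continuous_on {a..b} f"
  shows "continuous_on {a..b} f"
  unfolding continuous_on_iff
proof (intro ballI allI impI)
  fix x e assume x: "x \<in> {a..b}" and e: "(e::real) > 0"
  obtain d where d: "d > 0" and H: "\<And>n (aa::nat\<Rightarrow>real) bb. (\<forall>k<n. aa k \<le> bb k \<and> {aa k..bb k} \<subseteq> {a..b}) \<and>
        (\<forall>k<n. \<forall>l<n. k \<noteq> l \<longrightarrow> {aa k<..<bb k} \<inter> {aa l<..<bb l} = {}) \<and>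
        (\<Sum>k<n. bb k - aa k) < d \<longrightarrow> (\<Sum>k<n. norm (f (bb k) - f (aa k))) < e"
    using assms e unfolding abs_continuous_on_def by meson
  show "\<exists>d>0. \<forall>x'\<in>{a..b}. dist x' x < d \<longrightarrow> dist (f x') (f x) < e"
  proof (intro exI[of _ d] conjI d ballI impI)
    fix y assume y: "y \<in> {a..b}" "dist y x < d"
    define aa where "aa = (\<lambda>k::nat. min x y)"
    define bb where "bb = (\<lambda>k::nat. max x y)"
    have "(\<Sum>k<1. norm (f (bb k) - f (aa k))) < e"
      using H[of 1 aa bb] x y by (auto simp: aa_def bb_def dist_real_def)
    hence "norm (f (max x y) - f (min x y)) < e" by (simp add: aa_def bb_def)
    thus "dist (f y) (f x) < e"
      by (cases "x \<le> y") (auto simp: dist_norm norm_minus_commute max_def min_def)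
  qed
qed

context
  fixes C D :: "'a::euclidean_space set" and F G :: "'a \<Rightarrow> 'a set"
    and E :: "(real \<times> nat) set" and \<phi> :: "real \<times> nat \<Rightarrow> 'a"
  assumes sol: "is_solution C F D G E \<phi>"
begin

lemma sol_htd: "hybrid_time_domain E" using sol unfolding is_solution_def by blast

lemma sol_slice_sub:
  assumes "(a, j) \<in> E" "(b, j) \<in> E"
  shows "{a..b} \<subseteq> time_slice E j"
  using htd_convex[OF sol_htd assms(1,2)] unfolding time_slice_def by auto

lemma sol_ac:
  assumes "(a, j) \<in> E" "(b, j) \<in> E"
  shows "abs_continuous_on {a..b} (\<lambda>t. \<phi> (t, j))"
  using sol sol_slice_sub[OF assms] unfolding is_solution_def locally_abs_continuous_on_def by blast

lemma sol_cont:
  assumes "(a, j) \<in> E" "(b, j) \<in> E"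
  shows "continuous_on {a..b} (\<lambda>t. \<phi> (t, j))"
  using ac_imp_continuous[OF sol_ac[OF assms]] .

lemma sol_interior_C:
  assumes "(a, j) \<in> E" "(b, j) \<in> E" "a < t" "t < b"
  shows "\<phi> (t, j) \<in> C"
proof -
  have "{a<..<b} \<subseteq> interior (time_slice E j)"
    using sol_slice_sub[OF assms(1,2)] by (intro interior_maximal) auto
  hence ti: "t \<in> interior (time_slice E j)" using assms(3,4) by auto
  hence "interior (time_slice E j) \<noteq> {}" by auto
  thus ?thesis using sol ti unfolding is_solution_def by blast
qed

lemma sol_jump:
  assumes "(t, j) \<in> E" "(t, Suc j) \<in> E"
  shows "\<phi> (t, j) \<in> D" "\<phi> (t, Suc j) \<in> G (\<phi> (t, j))"
  using sol assms unfolding is_solution_def by blast+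

lemma sol_init: "\<phi> (0, 0) \<in> C \<union> D"
  using sol unfolding is_solution_def by blast

lemma sol_mvp:
  assumes "(a, j) \<in> E" "(b, j) \<in> E" "a < b" "closed S" "convex S"
    "\<And>u. a < u \<Longrightarrow> u < b \<Longrightarrow> F (\<phi> (u, j)) \<subseteq> S"
  shows "(\<phi> (b, j) - \<phi> (a, j)) /\<^sub>R (b - a) \<in> S"
proof -
  have sub: "{a..b} \<subseteq> time_slice E j" by (rule sol_slice_sub[OF assms(1,2)])
  have "{a<..<b} \<subseteq> interior (time_slice E j)"
    using sub by (intro interior_maximal) auto
  hence "interior (time_slice E j) \<noteq> {}" using assms(3) by auto
  hence "AE t in lebesgue. t \<in> time_slice E j \<longrightarrow>
           (\<exists>v. ((\<lambda>s. \<phi> (s, j)) has_vector_derivative v) (at t) \<and> v \<in> F (\<phi> (t, j)))"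
    using sol unfolding is_solution_def by blast
  then obtain N0 where N0: "\<And>t. t \<in> space lebesgue - N0 \<Longrightarrow> t \<in> time_slice E j \<longrightarrow>
           (\<exists>v. ((\<lambda>s. \<phi> (s, j)) has_vector_derivative v) (at t) \<and> v \<in> F (\<phi> (t, j)))"
    "N0 \<in> null_sets lebesgue"
    by (rule AE_E3) blast
  define N where "N = N0 \<union> {a, b}"
  have negN: "negligible N" unfolding N_def
    using N0(2) by (simp add: negligible_iff_null_sets[symmetric] negligible_insert)
  show ?thesis
  proof (rule ac_mean_value[OF assms(3) sol_ac[OF assms(1,2)] negN assms(4,5)])
    fix t assume t: "t \<in> {a..b}" "t \<notin> N"
    hence t2: "a < t" "t < b" "t \<notin> N0" by (auto simp: N_def)
    have "t \<in> time_slice E j" using sub t by auto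
    then obtain v where v: "((\<lambda>s. \<phi> (s, j)) has_vector_derivative v) (at t)" "v \<in> F (\<phi> (t, j))"
      using N0(1)[of t] t2 by auto
    show "\<exists>v. ((\<lambda>s. \<phi> (s, j)) has_vector_derivative v) (at t) \<and> v \<in> S"
      using v assms(6)[OF t2(1,2)] by blast
  qed
qed

lemma sol_closure_C:
  assumes "(a, j) \<in> E" "(b, j) \<in> E" "a < b" "a \<le> t" "t \<le> b" "closed C"
  shows "\<phi> (t, j) \<in> C"
proof -
  have cl: "closure {a<..<b} = {a..b}" using assms(3) by simp
  have "(\<lambda>t. \<phi> (t, j)) ` closure {a<..<b} \<subseteq> C"
    by (rule image_closure_subset) (use sol_cont[OF assms(1,2)] cl assms sol_interior_C[OF assms(1,2)] in auto)
  thus ?thesis using cl assms(4,5) by auto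
qed

end

definition mvflow :: "'a::euclidean_space set \<Rightarrow> ('a \<Rightarrow> 'a set) \<Rightarrow> (real \<Rightarrow> 'a) \<Rightarrow> real \<Rightarrow> bool" where
  "mvflow C F \<gamma> h \<longleftrightarrow> h > 0 \<and> continuous_on {0..h} \<gamma> \<and> (\<forall>u. 0 < u \<and> u < h \<longrightarrow> \<gamma> u \<in> C) \<and>
     (\<forall>a b S. 0 \<le> a \<and> a < b \<and> b \<le> h \<and> closed S \<and> convex S \<and> (\<forall>u. a < u \<and> u < b \<longrightarrow> F (\<gamma> u) \<subseteq> S)
        \<longrightarrow> (\<gamma> b - \<gamma> a) /\<^sub>R (b - a) \<in> S)"

lemma mvflowD:
  assumes "mvflow C F \<gamma> h"
  shows "h > 0" "continuous_on {0..h} \<gamma>" "\<And>u. 0 < u \<Longrightarrow> u < h \<Longrightarrow> \<gamma> u \<in> C"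
    "\<And>a b S. 0 \<le> a \<Longrightarrow> a < b \<Longrightarrow> b \<le> h \<Longrightarrow> closed S \<Longrightarrow> convex S \<Longrightarrow>
       (\<And>u. a < u \<Longrightarrow> u < b \<Longrightarrow> F (\<gamma> u) \<subseteq> S) \<Longrightarrow> (\<gamma> b - \<gamma> a) /\<^sub>R (b - a) \<in> S"
  using assms unfolding mvflow_def by blast+

lemma mvflow_restrict:
  assumes "mvflow C F \<gamma> h" "0 < h'" "h' \<le> h"
  shows "mvflow C F \<gamma> h'"
proof -
  have "continuous_on {0..h'} \<gamma>" using continuous_on_subset[OF mvflowD(2)[OF assms(1)]] assms by auto
  thus ?thesis using assms mvflowD[OF assms(1)] unfolding mvflow_def by auto
qed

lemma mvflow_C0:
  assumes "mvflow C F \<gamma> h" "closed C"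
  shows "\<gamma> 0 \<in> C"
proof -
  have h: "h > 0" using mvflowD(1)[OF assms(1)] .
  have cl: "closure {0<..<h} = {0..h}" using h by simp
  have "\<gamma> ` closure {0<..<h} \<subseteq> C"
    by (rule image_closure_subset) (use mvflowD(2,3)[OF assms(1)] cl assms(2) in auto)
  thus ?thesis using cl h by auto
qed

lemma mvflow_norm:
  assumes "mvflow C F \<gamma> h" "0 \<le> a" "a < b" "b \<le> h"
    "\<And>u f. a < u \<Longrightarrow> u < b \<Longrightarrow> f \<in> F (\<gamma> u) \<Longrightarrow> norm f \<le> M"
  shows "norm (\<gamma> b - \<gamma> a) \<le> M * (b - a)"
proof -
  have "(\<gamma> b - \<gamma> a) /\<^sub>R (b - a) \<in> cball 0 M"
    by (rule mvflowD(4)[OF assms(1-4)]) (use assms(5) in auto)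
  hence i: "inverse (b - a) * norm (\<gamma> b - \<gamma> a) \<le> M" using assms(3) by simp
  have "norm (\<gamma> b - \<gamma> a) = (b - a) * (inverse (b - a) * norm (\<gamma> b - \<gamma> a))" using assms(3) by simp
  also have "\<dots> \<le> (b - a) * M" using i assms(3) by (intro mult_left_mono) auto
  finally show ?thesis by (simp add: mult.commute)
qed

lemma mvflow_speed:
  assumes fl: "mvflow C F \<gamma> h"
    and Mb: "\<And>z f. z \<in> C \<Longrightarrow> z \<in> ball x0 \<rho> \<Longrightarrow> f \<in> F z \<Longrightarrow> norm f \<le> M"
    and d0: "dist (\<gamma> 0) x0 < \<rho> / 2" and Mh: "M * h < \<rho> / 2" and M0: "M \<ge> 0"
  shows "\<And>u. 0 \<le> u \<Longrightarrow> u \<le> h \<Longrightarrow> norm (\<gamma> u - \<gamma> 0) \<le> M * u"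
proof -
  have h: "h > 0" using mvflowD(1)[OF fl] .
  have cont: "continuous_on {0..h} \<gamma>" using mvflowD(2)[OF fl] .
  have inball: "\<gamma> u \<in> ball x0 \<rho>" if u: "0 \<le> u" "u \<le> h" for u
  proof (rule ccontr)
    assume nu: "\<gamma> u \<notin> ball x0 \<rho>"
    define A where "A = {v \<in> {0..h}. (\<lambda>_. \<rho>) v \<le> (\<lambda>v. dist x0 (\<gamma> v)) v}"
    have clA: "closed A" unfolding A_def
      by (intro continuous_on_closed_Collect_le continuous_intros cont closed_atLeastAtMost)
    have uA: "u \<in> A" using u nu by (auto simp: A_def)
    have bdd: "bdd_below A" unfolding A_def by (rule bdd_belowI[of _ 0]) auto
    define u1 where "u1 = Inf A"
    have u1A: "u1 \<in> A" unfolding u1_def using closed_contains_Inf[OF _ bdd clA] uA by blast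
    have u1le: "u1 \<le> u" unfolding u1_def by (rule cInf_lower[OF uA bdd])
    have u1pos: "u1 > 0"
    proof -
      have "u1 \<ge> 0" using u1A by (auto simp: A_def)
      moreover have "u1 \<noteq> 0"
      proof
        assume "u1 = 0"
        hence "\<rho> \<le> dist x0 (\<gamma> 0)" using u1A by (simp add: A_def)
        moreover have "dist x0 (\<gamma> 0) < \<rho> / 2" using d0 by (simp add: dist_commute)
        ultimately show False using zero_le_dist[of x0 "\<gamma> 0"] by linarith
      qed
      ultimately show ?thesis by simp
    qed
    have below: "\<gamma> v \<in> ball x0 \<rho>" if "0 \<le> v" "v < u1" for v
    proof (rule ccontr)
      assume "\<gamma> v \<notin> ball x0 \<rho>"
      hence "v \<in> A" using that u1le u by (auto simp: A_def)
      hence "u1 \<le> v" unfolding u1_def by (rule cInf_lower[OF _ bdd])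
      thus False using that by simp
    qed
    have "norm (\<gamma> u1 - \<gamma> 0) \<le> M * (u1 - 0)"
    proof (rule mvflow_norm[OF fl order_refl u1pos])
      show "u1 \<le> h" using u1le u by simp
      fix v f assume "0 < v" "v < u1" "f \<in> F (\<gamma> v)"
      moreover have "\<gamma> v \<in> C" using mvflowD(3)[OF fl, of v] \<open>0 < v\<close> \<open>v < u1\<close> u1le u by simp
      ultimately show "norm f \<le> M" using Mb below by auto
    qed
    hence "norm (\<gamma> u1 - \<gamma> 0) < \<rho> / 2"
    proof -
      assume a: "norm (\<gamma> u1 - \<gamma> 0) \<le> M * (u1 - 0)"
      have "M * u1 \<le> M * h" using u1le u M0 by (intro mult_left_mono) auto
      thus ?thesis using a Mh by simp
    qed
    hence "dist x0 (\<gamma> u1) < \<rho>" using d0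
      by (metis dist_commute dist_norm dist_triangle_half_r)
    thus False using u1A by (simp add: A_def)
  qed
  fix u assume u: "0 \<le> u" "u \<le> h"
  show "norm (\<gamma> u - \<gamma> 0) \<le> M * u"
  proof (cases "u = 0")
    case True thus ?thesis by simp
  next
    case False
    hence up: "0 < u" using u by simp
    have "norm (\<gamma> u - \<gamma> 0) \<le> M * (u - 0)"
    proof (rule mvflow_norm[OF fl order_refl up u(2)])
      fix v f assume v: "0 < v" "v < u" "f \<in> F (\<gamma> v)"
      have "\<gamma> v \<in> C" using mvflowD(3)[OF fl, of v] v u by simp
      moreover have "\<gamma> v \<in> ball x0 \<rho>" using inball[of v] v u by simp
      ultimately show "norm f \<le> M" using Mb v(3) by blast
    qed
    thus ?thesis by simp
  qed
qed

lemma lb_ball: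
  assumes "locally_bounded_rel F C" "x0 \<in> C"
  obtains \<rho> M where "\<rho> > 0" "M > 0" "\<And>z f. z \<in> C \<Longrightarrow> z \<in> ball x0 \<rho> \<Longrightarrow> f \<in> F z \<Longrightarrow> norm f \<le> M"
proof -
  obtain U where U: "open U" "x0 \<in> U" "bounded (\<Union>z\<in>U \<inter> C. F z)"
    using assms unfolding locally_bounded_rel_def by blast
  obtain \<rho> where r: "\<rho> > 0" "ball x0 \<rho> \<subseteq> U" using U(1,2) open_contains_ball by blast
  obtain M where M: "\<And>x. x \<in> (\<Union>z\<in>U \<inter> C. F z) \<Longrightarrow> norm x \<le> M" using U(3) unfolding bounded_iff by blast
  show ?thesis
  proof (rule that[OF r(1), of "max M 1"])
    show "max M 1 > 0" by simp
    fix z f assume "z \<in> C" "z \<in> ball x0 \<rho>" "f \<in> F z"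
    hence "norm f \<le> M" using M r(2) by blast
    thus "norm f \<le> max M 1" by simp
  qed
qed

lemma osc_closed:
  fixes F :: "'a::euclidean_space \<Rightarrow> 'b::euclidean_space set"
  assumes "osc_rel F C" "x \<in> C"
  shows "closed (F x)"
  unfolding closed_sequential_limits
proof (intro allI impI)
  fix ys y assume a: "(\<forall>n. ys n \<in> F x) \<and> ys \<longlonglongrightarrow> y"
  show "y \<in> F x"
    using assms(1) assms(2) a unfolding osc_rel_def
    by (metis (no_types, lifting) tendsto_const)
qed

lemma osc_halfspace:
  fixes F :: "'a::euclidean_space \<Rightarrow> 'a set"
  assumes osc: "osc_rel F C" and lb: "locally_bounded_rel F C" and x0: "x0 \<in> C"
    and H: "\<And>f. f \<in> F x0 \<Longrightarrow> c < inner a f"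
  obtains \<rho> where "\<rho> > 0" "\<And>z f. z \<in> C \<Longrightarrow> z \<in> ball x0 \<rho> \<Longrightarrow> f \<in> F z \<Longrightarrow> c \<le> inner a f"
proof -
  obtain \<rho>0 M where r0: "\<rho>0 > 0" "M > 0" "\<And>z f. z \<in> C \<Longrightarrow> z \<in> ball x0 \<rho>0 \<Longrightarrow> f \<in> F z \<Longrightarrow> norm f \<le> M"
    using lb_ball[OF lb x0] by blast
  have "\<exists>\<rho>>0. \<forall>z f. z \<in> C \<longrightarrow> z \<in> ball x0 \<rho> \<longrightarrow> f \<in> F z \<longrightarrow> c \<le> inner a f"
  proof (rule ccontr)
    assume "\<not> ?thesis"
    hence "\<forall>n::nat. \<exists>z f. z \<in> C \<and> z \<in> ball x0 (\<rho>0 / (real n + 1)) \<and> f \<in> F z \<and> inner a f < c"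
      using r0(1) by (metis divide_pos_pos not_le of_nat_0_le_iff add_nonneg_pos zero_less_one)
    then obtain z f where zf: "\<And>n. z n \<in> C" "\<And>n. z n \<in> ball x0 (\<rho>0 / (real n + 1))"
      "\<And>n. f n \<in> F (z n)" "\<And>n. inner a (f n) < c" by metis
    have zb: "z n \<in> ball x0 \<rho>0" for n
    proof -
      have "\<rho>0 / (real n + 1) \<le> \<rho>0" using r0(1) by (simp add: divide_le_eq)
      thus ?thesis using zf(2)[of n] by auto
    qed
    have fb: "f n \<in> cball 0 M" for n using r0(3)[OF zf(1) zb zf(3)] by simp
    obtain l r where lr: "l \<in> cball 0 M" "strict_mono (r :: nat \<Rightarrow> nat)" "(f \<circ> r) \<longlonglongrightarrow> l"
      using seq_compactE[OF compact_imp_seq_compact[OF compact_cball] ] fb by metis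
    have zlim: "z \<longlonglongrightarrow> x0"
    proof (rule tendstoI)
      fix e :: real assume e: "e > 0"
      obtain N :: nat where N: "\<rho>0 / e < real N" using reals_Archimedean2 by blast
      show "\<forall>\<^sub>F n in sequentially. dist (z n) x0 < e"
      proof (rule eventually_sequentiallyI[of N])
        fix n assume n: "N \<le> n"
        have "\<rho>0 / e < real n + 1" using N n by linarith
        hence "\<rho>0 < e * (real n + 1)" using e by (simp add: divide_less_eq mult.commute)
        hence "\<rho>0 / (real n + 1) < e" by (simp add: divide_less_eq mult.commute)
        thus "dist (z n) x0 < e" using zf(2)[of n] by (simp add: dist_commute)
      qed
    qed
    have zr: "(z \<circ> r) \<longlonglongrightarrow> x0" using LIMSEQ_subseq_LIMSEQ[OF zlim lr(2)] .
    have "l \<in> F x0"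
      using osc x0 zr lr(3) zf(1,3) unfolding osc_rel_def by (metis comp_apply)
    moreover have "inner a l \<le> c"
    proof (rule LIMSEQ_le_const2)
      show "(\<lambda>n. inner a ((f \<circ> r) n)) \<longlonglongrightarrow> inner a l" by (intro tendsto_intros lr(3))
      show "\<exists>N. \<forall>n\<ge>N. inner a ((f \<circ> r) n) \<le> c" using zf(4) less_imp_le by auto
    qed
    ultimately show False using H by fastforce
  qed
  thus ?thesis using that by blast
qed

lemma seq_small:
  fixes f :: "nat \<Rightarrow> 'b::real_normed_vector"
  assumes "\<And>n. norm (f n) \<le> c / (real n + 1)"
  shows "f \<longlonglongrightarrow> 0"
proof (rule Lim_null_comparison)
  show "\<forall>\<^sub>F n in sequentially. norm (f n) \<le> c * inverse (real (Suc n))"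
    using assms by (simp add: divide_inverse add.commute)
  show "(\<lambda>n. c * inverse (real (Suc n))) \<longlonglongrightarrow> 0"
    using tendsto_mult[OF tendsto_const LIMSEQ_inverse_real_of_nat, of c] by simp
qed

lemma noflow:
  fixes C :: "'a::euclidean_space set" and F :: "'a \<Rightarrow> 'a set" and K :: "'a set"
  assumes clC: "closed C" and osc: "osc_rel F C" and lb: "locally_bounded_rel F C"
    and cvx: "\<And>x. x \<in> C \<Longrightarrow> convex (F x)" and K: "compact K"
    and tc: "\<And>x. x \<in> K \<Longrightarrow> x \<in> C \<Longrightarrow> F x \<inter> tangent_cone C x = {}"
    and \<sigma>: "\<sigma> > 0"
  obtains r where "r > 0" "\<And>\<gamma> k. mvflow C F \<gamma> \<sigma> \<Longrightarrow> k \<in> K \<Longrightarrow> r \<le> dist (\<gamma> 0) k"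
proof -
  have "\<exists>r>0. \<forall>\<gamma> k. mvflow C F \<gamma> \<sigma> \<longrightarrow> k \<in> K \<longrightarrow> r \<le> dist (\<gamma> 0) k"
  proof (rule ccontr)
    assume na: "\<not> ?thesis"
    have "\<forall>n::nat. \<exists>\<gamma> k. mvflow C F \<gamma> \<sigma> \<and> k \<in> K \<and> dist (\<gamma> 0) k < 1 / (real n + 1)"
    proof
      fix n :: nat
      have "1 / (real n + 1) > 0" by simp
      thus "\<exists>\<gamma> k. mvflow C F \<gamma> \<sigma> \<and> k \<in> K \<and> dist (\<gamma> 0) k < 1 / (real n + 1)"
        using na not_le by blast
    qed
    then obtain \<Gamma> kk where GK: "\<And>n. mvflow C F (\<Gamma> n) \<sigma>" "\<And>n. kk n \<in> K"
      "\<And>n. dist (\<Gamma> n 0) (kk n) < 1 / (real n + 1)" by metis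
    obtain x0 r0 where xr: "x0 \<in> K" "strict_mono (r0 :: nat \<Rightarrow> nat)" "(kk \<circ> r0) \<longlonglongrightarrow> x0"
      using seq_compactE[OF compact_imp_seq_compact[OF K], of kk] GK(2) by metis
    define y where "y n = \<Gamma> (r0 n) 0" for n
    have ylim: "y \<longlonglongrightarrow> x0"
    proof (rule Lim_transform[OF xr(3)])
      show "(\<lambda>n. y n - (kk \<circ> r0) n) \<longlonglongrightarrow> 0"
      proof (rule seq_small)
        fix n
        have "norm (y n - (kk \<circ> r0) n) < 1 / (real (r0 n) + 1)"
          using GK(3)[of "r0 n"] by (simp add: y_def dist_norm)
        also have "\<dots> \<le> 1 / (real n + 1)"
          using seq_suble[OF xr(2), of n] by (intro divide_left_mono) auto
        finally show "norm (y n - (kk \<circ> r0) n) \<le> 1 / (real n + 1)" by simp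
      qed
    qed
    have yC: "y n \<in> C" for n unfolding y_def by (rule mvflow_C0[OF GK(1) clC])
    have x0C: "x0 \<in> C"
      using clC yC ylim unfolding closed_sequential_limits by blast
    obtain \<rho>0 M where rM: "\<rho>0 > 0" "M > 0" "\<And>z f. z \<in> C \<Longrightarrow> z \<in> ball x0 \<rho>0 \<Longrightarrow> f \<in> F z \<Longrightarrow> norm f \<le> M"
      using lb_ball[OF lb x0C] by blast
    define h1 where "h1 = min (\<sigma> / 2) (\<rho>0 / (4 * M))"
    have h1: "h1 > 0" "h1 < \<sigma>" "M * h1 \<le> \<rho>0 / 4"
    proof -
      show "h1 > 0" using \<sigma> rM by (simp add: h1_def)
      show "h1 < \<sigma>" using \<sigma> by (simp add: h1_def)
      have "h1 \<le> \<rho>0 / (4 * M)" by (simp add: h1_def)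
      hence "M * h1 \<le> M * (\<rho>0 / (4 * M))" using rM by (intro mult_left_mono) auto
      thus "M * h1 \<le> \<rho>0 / 4" using rM by simp
    qed
    define hh where "hh m = h1 / (real m + 1)" for m :: nat
    have hh: "hh m > 0" "hh m \<le> h1" "hh m < \<sigma>" for m
    proof -
      show "hh m > 0" using h1 by (simp add: hh_def)
      show "hh m \<le> h1" using h1 by (simp add: hh_def divide_le_eq)
      thus "hh m < \<sigma>" using h1 by simp
    qed
    have hh0: "hh \<longlonglongrightarrow> 0" by (rule seq_small[of _ h1]) (use h1 in \<open>simp add: hh_def\<close>)
    have "\<forall>m. \<exists>n. dist (y n) x0 < min (\<rho>0 / 2) ((hh m)\<^sup>2)"
    proof
      fix m
      have "min (\<rho>0 / 2) ((hh m)\<^sup>2) > 0" using rM hh[of m] by simp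
      then obtain n where "\<forall>n'\<ge>n. dist (y n') x0 < min (\<rho>0 / 2) ((hh m)\<^sup>2)"
        using ylim unfolding LIMSEQ_def by blast
      thus "\<exists>n. dist (y n) x0 < min (\<rho>0 / 2) ((hh m)\<^sup>2)" by blast
    qed
    then obtain nn where nn: "\<And>m. dist (y (nn m)) x0 < min (\<rho>0 / 2) ((hh m)\<^sup>2)" by metis
    define G where "G m = \<Gamma> (r0 (nn m))" for m
    define Y where "Y m = G m 0" for m
    have YY: "Y m = y (nn m)" for m by (simp add: Y_def G_def y_def)
    have Yd: "dist (Y m) x0 < \<rho>0 / 2" "dist (Y m) x0 < (hh m)\<^sup>2" for m using nn[of m] YY by auto
    have flow: "mvflow C F (G m) (hh m)" for m
      unfolding G_def by (rule mvflow_restrict[OF GK(1) hh(1)]) (use hh(3)[of m] in simp)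
    have speed: "norm (G m u - Y m) \<le> M * u" if "0 \<le> u" "u \<le> hh m" for m u
    proof -
      have d: "dist (G m 0) x0 < \<rho>0 / 2" using Yd by (simp add: Y_def)
      have "M * hh m \<le> M * h1" using rM hh by (intro mult_left_mono) auto
      hence mh: "M * hh m < \<rho>0 / 2" using h1(3) rM(1) by linarith
      have m0: "M \<ge> 0" using rM by simp
      show ?thesis using mvflow_speed[OF flow rM(3) d mh m0 that] by (simp add: Y_def)
    qed
    define q where "q m = (G m (hh m) - Y m) /\<^sub>R hh m" for m
    define w where "w m = (G m (hh m) - x0) /\<^sub>R hh m" for m
    have qb: "norm (q m) \<le> M" for m
    proof -
      have "norm (G m (hh m) - Y m) \<le> M * hh m" using speed[of "hh m" m] hh(1)[of m] by simp
      hence "inverse (hh m) * norm (G m (hh m) - Y m) \<le> inverse (hh m) * (M * hh m)"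
        using hh(1)[of m] by (intro mult_left_mono) auto
      also have "\<dots> = M" using hh(1)[of m] by simp
      finally show ?thesis using hh(1)[of m] by (simp add: q_def)
    qed
    have wq: "norm (w m - q m) < hh m" for m
    proof -
      have "w m - q m = (Y m - x0) /\<^sub>R hh m" by (simp add: w_def q_def algebra_simps)
      hence "norm (w m - q m) = dist (Y m) x0 / hh m" using hh[of m] by (simp add: dist_norm divide_inverse mult.commute)
      also have "\<dots> < (hh m)\<^sup>2 / hh m" using Yd(2)[of m] hh[of m] by (simp add: divide_strict_right_mono)
      also have "\<dots> = hh m" by (simp add: power2_eq_square)
      finally show ?thesis .
    qed
    have wb: "w m \<in> cball 0 (M + h1)" for m
    proof -
      have "norm (w m) \<le> norm (q m) + norm (w m - q m)" by (metis add.commute diff_add_cancel norm_triangle_ineq)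
      thus ?thesis using qb[of m] wq[of m] hh[of m] by simp
    qed
    obtain v p where vp: "v \<in> cball 0 (M + h1)" "strict_mono (p :: nat \<Rightarrow> nat)" "(w \<circ> p) \<longlonglongrightarrow> v"
      using seq_compactE[OF compact_imp_seq_compact[OF compact_cball], of w] wb by metis
    have wq0: "(\<lambda>m. w m - q m) \<longlonglongrightarrow> 0"
    proof (rule Lim_null_comparison[OF _ hh0])
      show "\<forall>\<^sub>F m in sequentially. norm (w m - q m) \<le> hh m"
        by (rule always_eventually) (use wq less_imp_le in blast)
    qed
    have qv: "(q \<circ> p) \<longlonglongrightarrow> v"
    proof (rule Lim_transform[OF vp(3)])
      have "(\<lambda>m. w (p m) - q (p m)) \<longlonglongrightarrow> 0" using LIMSEQ_subseq_LIMSEQ[OF wq0 vp(2)] by (simp add: o_def)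
      hence "(\<lambda>m. - (w (p m) - q (p m))) \<longlonglongrightarrow> - 0" by (rule tendsto_minus)
      thus "(\<lambda>m. (q \<circ> p) m - (w \<circ> p) m) \<longlonglongrightarrow> 0" by simp
    qed
    have GC: "G m (hh m) \<in> C" for m
      unfolding G_def using mvflowD(3)[OF GK(1)] hh by blast
    have vT: "v \<in> tangent_cone C x0"
      unfolding tangent_cone_def
    proof (intro CollectI exI conjI allI)
      fix i
      show "(hh \<circ> p) i > 0" using hh by simp
      have "x0 + (hh \<circ> p) i *\<^sub>R (w \<circ> p) i = G (p i) (hh (p i))"
        using hh[of "p i"] by (simp add: w_def)
      thus "x0 + (hh \<circ> p) i *\<^sub>R (w \<circ> p) i \<in> C" using GC by simp
    next
      show "(hh \<circ> p) \<longlonglongrightarrow> 0" using LIMSEQ_subseq_LIMSEQ[OF hh0 vp(2)] .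
      show "(w \<circ> p) \<longlonglongrightarrow> v" by (rule vp(3))
    qed
    have vF: "v \<in> F x0"
    proof (rule ccontr)
      assume nv: "v \<notin> F x0"
      obtain a c where ac: "inner a v < c" "\<And>f. f \<in> F x0 \<Longrightarrow> inner a f > c"
        using separating_hyperplane_closed_point[OF cvx[OF x0C] osc_closed[OF osc x0C] nv] by blast
      obtain \<rho>1 where r1: "\<rho>1 > 0" "\<And>z f. z \<in> C \<Longrightarrow> z \<in> ball x0 \<rho>1 \<Longrightarrow> f \<in> F z \<Longrightarrow> c \<le> inner a f"
        using osc_halfspace[OF osc lb x0C, of c a] ac(2) by blast
      have "(\<lambda>m. (M + h1) * hh m) \<longlonglongrightarrow> (M + h1) * 0" by (intro tendsto_intros hh0)
      then obtain N1 where N1: "\<And>m. m \<ge> N1 \<Longrightarrow> (M + h1) * hh m < \<rho>1"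
        using r1(1) unfolding LIMSEQ_def by (auto simp: dist_real_def) (metis abs_less_iff)
      have cq: "c \<le> inner a (q m)" if m: "m \<ge> N1" for m
      proof -
        have "(G m (hh m) - G m 0) /\<^sub>R (hh m - 0) \<in> {f. c \<le> inner a f}"
        proof (rule mvflowD(4)[OF flow order_refl hh(1) order_refl closed_halfspace_ge convex_halfspace_ge])
          fix u assume u: "0 < u" "u < hh m"
          have uC: "G m u \<in> C" using mvflowD(3)[OF flow] u by blast
          have "dist (G m u) x0 \<le> norm (G m u - Y m) + dist (Y m) x0"
            by (metis dist_norm dist_triangle)
          also have "\<dots> \<le> M * hh m + (hh m)\<^sup>2"
          proof (intro add_mono)
            have "M * u \<le> M * hh m" using u rM(2) by (intro mult_left_mono) auto
            thus "norm (G m u - Y m) \<le> M * hh m" using speed[of u m] u by linarith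
            show "dist (Y m) x0 \<le> (hh m)\<^sup>2" using Yd(2)[of m] by simp
          qed
          also have "\<dots> \<le> (M + h1) * hh m"
            using hh[of m] by (simp add: power2_eq_square algebra_simps mult_right_mono)
          also have "\<dots> < \<rho>1" using N1 m by blast
          finally have "G m u \<in> ball x0 \<rho>1" by (simp add: dist_commute)
          thus "F (G m u) \<subseteq> {f. c \<le> inner a f}" using r1(2) uC by blast
        qed
        thus ?thesis by (simp add: q_def Y_def)
      qed
      have "c \<le> inner a v"
      proof (rule LIMSEQ_le_const)
        show "(\<lambda>i. inner a ((q \<circ> p) i)) \<longlonglongrightarrow> inner a v" by (intro tendsto_intros qv)
        show "\<exists>N. \<forall>i\<ge>N. c \<le> inner a ((q \<circ> p) i)"
          using cq seq_suble[OF vp(2)] by (metis comp_apply le_trans)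
      qed
      thus False using ac(1) by simp
    qed
    show False using tc[OF xr(1) x0C] vF vT by blast
  qed
  thus ?thesis using that by blast
qed

lemma osc_neg:
  fixes F :: "'a::euclidean_space \<Rightarrow> 'a set"
  assumes "osc_rel F C"
  shows "osc_rel (\<lambda>x. uminus ` F x) C"
  unfolding osc_rel_def
proof (intro ballI allI impI)
  fix x xs ys y assume x: "x \<in> C" and a: "(\<forall>i. xs i \<in> C \<and> ys i \<in> uminus ` F (xs i)) \<and> xs \<longlonglongrightarrow> x \<and> ys \<longlonglongrightarrow> y"
  have "- ys i \<in> F (xs i)" for i
  proof -
    obtain f where "f \<in> F (xs i)" "ys i = - f" using a by blast
    thus ?thesis by simp
  qed
  moreover have "\<forall>i. xs i \<in> C" using a by blast
  moreover have "xs \<longlonglongrightarrow> x" using a by blast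
  moreover have "(\<lambda>i. - ys i) \<longlonglongrightarrow> - y" using a by (intro tendsto_minus) blast
  ultimately have P: "(\<forall>i. xs i \<in> C \<and> - ys i \<in> F (xs i)) \<and> xs \<longlonglongrightarrow> x \<and> (\<lambda>i. - ys i) \<longlonglongrightarrow> - y"
    by blast
  have H: "\<forall>x\<in>C. \<forall>xs ys y. (\<forall>i. xs i \<in> C \<and> ys i \<in> F (xs i)) \<and> xs \<longlonglongrightarrow> x \<and> ys \<longlonglongrightarrow> y \<longrightarrow> y \<in> F x"
    using assms unfolding osc_rel_def .
  have "- y \<in> F x" using H[rule_format, OF x P] .
  thus "y \<in> uminus ` F x" by (metis image_eqI minus_minus)
qed

lemma lb_neg:
  fixes F :: "'a::euclidean_space \<Rightarrow> 'a set"
  assumes "locally_bounded_rel F C"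
  shows "locally_bounded_rel (\<lambda>x. uminus ` F x) C"
  unfolding locally_bounded_rel_def
proof
  fix x assume "x \<in> C"
  then obtain U where U: "open U" "x \<in> U" "bounded (\<Union>z\<in>U \<inter> C. F z)"
    using assms unfolding locally_bounded_rel_def by blast
  have "(\<Union>z\<in>U \<inter> C. uminus ` F z) = uminus ` (\<Union>z\<in>U \<inter> C. F z)" by auto
  hence "bounded (\<Union>z\<in>U \<inter> C. uminus ` F z)" using U(3) by simp
  thus "\<exists>U. open U \<and> x \<in> U \<and> bounded (\<Union>z\<in>U \<inter> C. uminus ` F z)" using U by blast
qed

lemma rho_witness:
  assumes "rhoA C D G x y < e" "setA C D G \<noteq> {}"
  obtains p q where "(p, q) \<in> setA C D G" "dist x p < e" "dist y q < e"
proof -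
  have "infdist (x, y) (setA C D G) < e" using assms(1) by (simp add: rhoA_def)
  hence "(INF a\<in>setA C D G. dist (x, y) a) < e" using assms(2) by (simp add: infdist_notempty)
  then obtain a where a: "a \<in> setA C D G" "dist (x, y) a < e"
    using assms(2) by (subst (asm) cINF_less_iff) (auto intro: bdd_belowI[of _ 0])
  obtain p q where pq: "a = (p, q)" by (cases a)
  have "dist x p \<le> dist (x, y) a" "dist y q \<le> dist (x, y) a"
    using dist_fst_le[of "(x, y)" a] dist_snd_le[of "(x, y)" a] pq by auto
  thus ?thesis using that a pq by force
qed

lemma rho_sym_le: "rhoA C D G x y \<le> rhoA C D G y x"
proof (cases "setA C D G = {}")
  case True thus ?thesis by (simp add: rhoA_def infdist_def)
next
  case False
  have "infdist (x, y) (setA C D G) \<le> (INF a\<in>setA C D G. dist (y, x) a)"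
  proof (rule cINF_greatest[OF False])
    fix a assume a: "a \<in> setA C D G"
    obtain p q where pq: "a = (p, q)" by (cases a)
    have "(q, p) \<in> setA C D G" using a pq unfolding setA_def by auto
    hence "infdist (x, y) (setA C D G) \<le> dist (x, y) (q, p)" by (rule infdist_le)
    also have "\<dots> = dist (y, x) a" using pq by (simp add: dist_Pair_Pair add.commute)
    finally show "infdist (x, y) (setA C D G) \<le> dist (y, x) a" .
  qed
  thus ?thesis using False by (simp add: rhoA_def infdist_notempty)
qed

lemma rho_sym: "rhoA C D G x y = rhoA C D G y x"
  using rho_sym_le[of C D G x y] rho_sym_le[of C D G y x] by simp

lemma rho_le:
  assumes "x \<in> C \<union> D"
  shows "rhoA C D G x y \<le> norm (x - y)"
proof -
  have "(x, x) \<in> setA C D G" using assms by (auto simp: setA_def)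
  hence "infdist (x, y) (setA C D G) \<le> dist (x, y) (x, x)" by (rule infdist_le)
  also have "\<dots> = norm (x - y)" by (simp add: dist_Pair_Pair dist_norm norm_minus_commute)
  finally show ?thesis by (simp add: rhoA_def)
qed

context
  fixes C D :: "'a::euclidean_space set" and F G :: "'a \<Rightarrow> 'a set"
    and E :: "(real \<times> nat) set" and \<phi> :: "real \<times> nat \<Rightarrow> 'a"
  assumes sol: "is_solution C F D G E \<phi>"
begin

lemma sol_mvflow_fwd:
  assumes "(s, j) \<in> E" "(s + h, j) \<in> E" "h > 0"
  shows "mvflow C F (\<lambda>u. \<phi> (s + u, j)) h"
  unfolding mvflow_def
proof (intro conjI allI impI)
  show "h > 0" by fact
  have c: "continuous_on {s..s + h} (\<lambda>t. \<phi> (t, j))" by (rule sol_cont[OF sol assms(1,2)])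
  show "continuous_on {0..h} (\<lambda>u. \<phi> (s + u, j))"
    by (rule continuous_on_compose2[OF c, of _ "\<lambda>u. s + u"]) (auto intro!: continuous_intros)
  fix u assume "0 < u \<and> u < h"
  thus "\<phi> (s + u, j) \<in> C" using sol_interior_C[OF sol assms(1,2), of "s + u"] by simp
next
  fix a b S assume A: "0 \<le> a \<and> a < b \<and> b \<le> h \<and> closed S \<and> convex S \<and>
      (\<forall>u. a < u \<and> u < b \<longrightarrow> F (\<phi> (s + u, j)) \<subseteq> S)"
  have ea: "(s + a, j) \<in> E" using htd_convex[OF sol_htd[OF sol] assms(1,2), of "s + a"] A by auto
  have eb: "(s + b, j) \<in> E" using htd_convex[OF sol_htd[OF sol] assms(1,2), of "s + b"] A by auto
  have "(\<phi> (s + b, j) - \<phi> (s + a, j)) /\<^sub>R ((s + b) - (s + a)) \<in> S"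
  proof (rule sol_mvp[OF sol ea eb])
    show "s + a < s + b" using A by simp
    show "closed S" "convex S" using A by auto
    fix u assume "s + a < u" "u < s + b"
    thus "F (\<phi> (u, j)) \<subseteq> S" using A by (metis add.commute add_less_cancel_right diff_add_cancel)
  qed
  thus "(\<phi> (s + b, j) - \<phi> (s + a, j)) /\<^sub>R (b - a) \<in> S" by simp
qed

lemma sol_mvflow_bwd:
  assumes "(s - h, j) \<in> E" "(s, j) \<in> E" "h > 0"
  shows "mvflow C (\<lambda>x. uminus ` F x) (\<lambda>u. \<phi> (s - u, j)) h"
  unfolding mvflow_def
proof (intro conjI allI impI)
  show "h > 0" by fact
  have c: "continuous_on {s - h..s} (\<lambda>t. \<phi> (t, j))" by (rule sol_cont[OF sol assms(1,2)])
  show "continuous_on {0..h} (\<lambda>u. \<phi> (s - u, j))"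
    by (rule continuous_on_compose2[OF c, of _ "\<lambda>u. s - u"]) (auto intro!: continuous_intros)
  fix u assume "0 < u \<and> u < h"
  thus "\<phi> (s - u, j) \<in> C" using sol_interior_C[OF sol assms(1,2), of "s - u"] by simp
next
  fix a b S assume A: "0 \<le> a \<and> a < b \<and> b \<le> h \<and> closed S \<and> convex S \<and>
      (\<forall>u. a < u \<and> u < b \<longrightarrow> uminus ` F (\<phi> (s - u, j)) \<subseteq> S)"
  have ea: "(s - a, j) \<in> E" using htd_convex[OF sol_htd[OF sol] assms(1,2), of "s - a"] A by auto
  have eb: "(s - b, j) \<in> E" using htd_convex[OF sol_htd[OF sol] assms(1,2), of "s - b"] A by auto
  have "(\<phi> (s - a, j) - \<phi> (s - b, j)) /\<^sub>R ((s - a) - (s - b)) \<in> uminus ` S"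
  proof (rule sol_mvp[OF sol eb ea])
    show "s - b < s - a" using A by simp
    show "closed (uminus ` S)" using A by (simp add: closed_negations)
    show "convex (uminus ` S)" using A by (simp add: convex_negations)
    fix u assume u: "s - b < u" "u < s - a"
    have all: "\<forall>u. a < u \<and> u < b \<longrightarrow> uminus ` F (\<phi> (s - u, j)) \<subseteq> S" using A by blast
    have "a < s - u \<and> s - u < b" using u by simp
    hence "uminus ` F (\<phi> (s - (s - u), j)) \<subseteq> S" using all by blast
    hence sub: "uminus ` F (\<phi> (u, j)) \<subseteq> S" by simp
    show "F (\<phi> (u, j)) \<subseteq> uminus ` S"
    proof
      fix f assume "f \<in> F (\<phi> (u, j))"
      hence "- f \<in> S" using sub by blast
      thus "f \<in> uminus ` S" by (metis image_eqI minus_minus)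
    qed
  qed
  then obtain f where f: "f \<in> S" "(\<phi> (s - a, j) - \<phi> (s - b, j)) /\<^sub>R ((s - a) - (s - b)) = - f"
    by blast
  have "(s - a) - (s - b) = b - a" by simp
  hence "- ((\<phi> (s - a, j) - \<phi> (s - b, j)) /\<^sub>R (b - a)) \<in> S" using f by simp
  thus "(\<phi> (s - b, j) - \<phi> (s - a, j)) /\<^sub>R (b - a) \<in> S"
    by (simp add: scaleR_diff_right)
qed

end

locale hsys =
  fixes C D :: "'a::euclidean_space set" and F G :: "'a \<Rightarrow> 'a set" and g :: "'a \<Rightarrow> 'a"
  assumes clC: "closed C" and clD: "closed D"
    and oscF: "osc_rel F C" and lbF: "locally_bounded_rel F C" and cvxF: "\<And>x. x \<in> C \<Longrightarrow> convex (F x)"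
    and Gg: "\<And>x. x \<in> D \<Longrightarrow> G x = {g x}"
    and gC: "\<And>x. x \<in> D \<Longrightarrow> g x \<in> C" and gnD: "\<And>x. x \<in> D \<Longrightarrow> g x \<notin> D"
    and ii: "\<And>x. x \<in> C \<Longrightarrow> x \<in> D \<Longrightarrow> F x \<inter> tangent_cone C x = {}"
    and iii: "\<And>x y. x \<in> C \<Longrightarrow> y \<in> D \<Longrightarrow> x = g y \<Longrightarrow> uminus ` F x \<inter> tangent_cone C x = {}"
begin

lemma oscN: "osc_rel (\<lambda>x. uminus ` F x) C" by (rule osc_neg[OF oscF])
lemma lbN: "locally_bounded_rel (\<lambda>x. uminus ` F x) C" by (rule lb_neg[OF lbF])
lemma cvxN: "\<And>x. x \<in> C \<Longrightarrow> convex (uminus ` F x)" by (simp add: convex_negations cvxF)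

lemma sol_jump_g:
  assumes "is_solution C F D G E \<phi>" "(t, j) \<in> E" "(t, Suc j) \<in> E"
  shows "\<phi> (t, j) \<in> D" "\<phi> (t, Suc j) = g (\<phi> (t, j))"
  using sol_jump[OF assms] Gg by auto

lemma no_flow_from_D:
  assumes sol: "is_solution C F D G E \<phi>" and "(a, j) \<in> E" "(b, j) \<in> E" "a < b" "\<phi> (a, j) \<in> D"
  shows False
proof -
  have xC: "\<phi> (a, j) \<in> C" using sol_closure_C[OF sol assms(2,3,4) order_refl _ clC] assms(4) by simp
  obtain r where r: "r > 0" "\<And>\<gamma> k. mvflow C F \<gamma> (b - a) \<Longrightarrow> k \<in> {\<phi> (a, j)} \<Longrightarrow> r \<le> dist (\<gamma> 0) k"
    using noflow[OF clC oscF lbF cvxF, of "{\<phi> (a, j)}" "b - a"] ii xC assms(5) assms(4) by auto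
  have "mvflow C F (\<lambda>u. \<phi> (a + u, j)) (b - a)"
    using sol_mvflow_fwd[OF sol assms(2), of "b - a"] assms(3,4) by simp
  from r(2)[OF this] r(1) show False by simp
qed

lemma sol_ordered:
  assumes sol: "is_solution C F D G E \<phi>"
  shows "ordered_htd E"
  unfolding ordered_htd_def
proof (intro allI impI)
  fix t j t' j' assume a: "(t, j) \<in> E" "(t', j') \<in> E" "j < j'"
  show "t \<le> t'"
  proof (rule ccontr)
    assume "\<not> t \<le> t'"
    hence tt: "t' < t" by simp
    obtain \<tau> where \<tau>: "\<tau> \<le> t'" "(\<tau>, j) \<in> E" "(\<tau>, Suc j) \<in> E"
      using htd_weird[OF sol_htd[OF sol] a(2,3)] by blast
    have "\<phi> (\<tau>, j) \<in> D" using sol_jump_g[OF sol \<tau>(2,3)] by simp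
    thus False using no_flow_from_D[OF sol \<tau>(2) a(1)] \<tau>(1) tt by simp
  qed
qed

end

lemma slice_start:
  assumes "hybrid_time_domain E" "(t, j) \<in> E"
  obtains a where "a \<le> t" "(a, j) \<in> E" "\<And>s. (s, j) \<in> E \<Longrightarrow> a \<le> s" "j = 0 \<Longrightarrow> a = 0"
    "\<And>k. j = Suc k \<Longrightarrow> (a, k) \<in> E \<and> (a, Suc k) \<in> E"
proof (cases j)
  case 0
  show ?thesis
  proof (rule that[of 0])
    show "0 \<le> t" by (rule htd_nonneg[OF assms])
    show "(0, j) \<in> E" unfolding 0 by (rule htd_00[OF assms(1)])
    show "\<And>s. (s, j) \<in> E \<Longrightarrow> 0 \<le> s" by (rule htd_nonneg[OF assms(1)])
    show "j = 0 \<Longrightarrow> 0 = 0" by (rule refl)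
    show "\<And>k. j = Suc k \<Longrightarrow> (0, k) \<in> E \<and> (0, Suc k) \<in> E" using 0 by simp
  qed
next
  case (Suc k)
  obtain \<tau> where \<tau>: "\<tau> \<le> t" "(\<tau>, k) \<in> E" "(\<tau>, Suc k) \<in> E"
    "\<And>x. (x, Suc k) \<in> E \<Longrightarrow> \<tau> \<le> x"
  proof -
    have tk: "(t, Suc k) \<in> E" using assms(2) Suc by simp
    show ?thesis by (rule htd_prev[OF assms(1) tk]) (rule that)
  qed
  show ?thesis
  proof (rule that[of \<tau>])
    show "\<tau> \<le> t" by fact
    show "(\<tau>, j) \<in> E" using \<tau>(3) Suc by simp
    show "\<And>s. (s, j) \<in> E \<Longrightarrow> \<tau> \<le> s" using \<tau>(4) Suc by simp
    show "j = 0 \<Longrightarrow> \<tau> = 0" using Suc by simp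
    show "\<And>k'. j = Suc k' \<Longrightarrow> (\<tau>, k') \<in> E \<and> (\<tau>, Suc k') \<in> E" using \<tau>(2,3) Suc by simp
  qed
qed

locale hconst = hsys C D F G g for C D :: "'a::euclidean_space set" and F G g +
  fixes Q Q' :: "'a set" and \<eta> \<epsilon>w \<sigma> lsp d1 d2 \<delta>g :: real
  assumes QD: "Q \<subseteq> D" and QQ': "Q \<subseteq> Q'" and Q'D: "Q' \<subseteq> D"
    and Q'I: "\<And>d q. d \<in> D \<Longrightarrow> q \<in> Q \<Longrightarrow> dist d q < 1 \<Longrightarrow> d \<in> Q'"
    and noflowF: "\<And>\<gamma> k. mvflow C F \<gamma> \<sigma> \<Longrightarrow> k \<in> Q \<Longrightarrow> 2 * \<epsilon>w \<le> dist (\<gamma> 0) k"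
    and noflowB: "\<And>\<gamma> k. mvflow C (\<lambda>x. uminus ` F x) \<gamma> \<sigma> \<Longrightarrow> k \<in> g ` Q' \<Longrightarrow> 2 * \<epsilon>w \<le> dist (\<gamma> 0) k"
    and speedF: "\<And>\<gamma> h. mvflow C F \<gamma> h \<Longrightarrow> h \<le> \<sigma> \<Longrightarrow> \<gamma> 0 \<in> C \<Longrightarrow>
        (\<exists>k\<in>Q' \<union> g ` Q'. dist (\<gamma> 0) k < 1) \<Longrightarrow> norm (\<gamma> h - \<gamma> 0) \<le> lsp"
    and speedB: "\<And>\<gamma> h. mvflow C (\<lambda>x. uminus ` F x) \<gamma> h \<Longrightarrow> h \<le> \<sigma> \<Longrightarrow> \<gamma> 0 \<in> C \<Longrightarrow>
        (\<exists>k\<in>Q' \<union> g ` Q'. dist (\<gamma> 0) k < 1) \<Longrightarrow> norm (\<gamma> h - \<gamma> 0) \<le> lsp"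
    and sep1: "\<And>a b. a \<in> Q' \<Longrightarrow> b \<in> D \<Longrightarrow> d1 \<le> dist a (g b)"
    and sep2: "\<And>a b. a \<in> Q' \<Longrightarrow> b \<in> D \<Longrightarrow> d2 \<le> dist (g a) b"
    and ucont: "\<And>a b. a \<in> Q' \<Longrightarrow> b \<in> Q' \<Longrightarrow> dist a b < \<delta>g \<Longrightarrow> dist (g a) (g b) < \<eta> / 4"
    and ew: "\<epsilon>w > 0" and sg: "\<sigma> > 0" and l0: "lsp \<ge> 0" and sge: "\<sigma> \<le> \<eta>"
    and N2: "lsp + \<epsilon>w < \<delta>g" and N2': "lsp + \<epsilon>w < 1"
    and N3: "4 * \<epsilon>w + lsp < \<eta>" and N4: "3 * \<epsilon>w + 2 * lsp < d1" and N5: "2 * \<epsilon>w < d2"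
    and N6: "3 * \<epsilon>w + lsp < 1"
begin

context
  fixes E :: "(real \<times> nat) set" and \<psi> :: "real \<times> nat \<Rightarrow> 'a"
  assumes sol: "is_solution C F D G E \<psi>"
begin

lemma fwd_speed:
  assumes "(a, j) \<in> E" "(b, j) \<in> E" "a < b" "b - a \<le> \<sigma>" "\<exists>k\<in>Q' \<union> g ` Q'. dist (\<psi> (a, j)) k < 1"
  shows "norm (\<psi> (b, j) - \<psi> (a, j)) \<le> lsp"
proof -
  have fl: "mvflow C F (\<lambda>u. \<psi> (a + u, j)) (b - a)"
    using sol_mvflow_fwd[OF sol assms(1), of "b - a"] assms(2,3) by simp
  have c: "\<psi> (a, j) \<in> C" using sol_closure_C[OF sol assms(1,2,3) order_refl _ clC] assms(3) by simp
  show ?thesis using speedF[OF fl assms(4)] c assms(5) by simp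
qed

lemma bwd_speed:
  assumes "(a, j) \<in> E" "(b, j) \<in> E" "a < b" "b - a \<le> \<sigma>" "\<exists>k\<in>Q' \<union> g ` Q'. dist (\<psi> (b, j)) k < 1"
  shows "norm (\<psi> (a, j) - \<psi> (b, j)) \<le> lsp"
proof -
  have fl: "mvflow C (\<lambda>x. uminus ` F x) (\<lambda>u. \<psi> (b - u, j)) (b - a)"
    using sol_mvflow_bwd[OF sol _ assms(2), of "b - a"] assms(1,3) by simp
  have c: "\<psi> (b, j) \<in> C" using sol_closure_C[OF sol assms(1,2,3) _ order_refl clC] assms(3) by simp
  show ?thesis using speedB[OF fl assms(4)] c assms(5) by simp
qed

lemma bwd_speed':
  assumes "(a, j) \<in> E" "(b, j) \<in> E" "a \<le> b" "b - a \<le> \<sigma>" "\<exists>k\<in>Q' \<union> g ` Q'. dist (\<psi> (b, j)) k < 1"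
  shows "norm (\<psi> (a, j) - \<psi> (b, j)) \<le> lsp"
proof (cases "a = b")
  case True thus ?thesis using l0 by simp
next
  case False thus ?thesis using bwd_speed[OF assms(1,2) _ assms(4,5)] assms(3) by simp
qed

lemma landing_far:
  assumes "(t, Suc k) \<in> E" "(a, k) \<in> E" "(a, Suc k) \<in> E" "a \<le> t"
    "p \<in> Q'" "dist (\<psi> (t, Suc k)) p < \<epsilon>w"
  shows "a \<le> t - \<sigma>"
proof (rule ccontr)
  assume "\<not> a \<le> t - \<sigma>"
  hence at: "t - a < \<sigma>" by simp
  have zD: "\<psi> (a, k) \<in> D" and zl: "\<psi> (a, Suc k) = g (\<psi> (a, k))" using sol_jump_g[OF sol assms(2,3)] by auto
  have "norm (\<psi> (a, Suc k) - \<psi> (t, Suc k)) \<le> lsp"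
  proof (rule bwd_speed'[OF assms(3,1,4)])
    show "t - a \<le> \<sigma>" using at by simp
    show "\<exists>kk\<in>Q' \<union> g ` Q'. dist (\<psi> (t, Suc k)) kk < 1" using assms(5,6) N6 ew l0 by (intro bexI[of _ p]) auto
  qed
  hence "dist p (g (\<psi> (a, k))) < \<epsilon>w + lsp" using assms(6) zl
    by (metis add_less_le_mono dist_commute dist_norm dist_triangle_lt)
  moreover have "d1 \<le> dist p (g (\<psi> (a, k)))" by (rule sep1[OF assms(5) zD])
  ultimately show False using N4 ew l0 by linarith
qed

end

end

lemma dist_chain3: "dist a d \<le> dist a b + dist b c + dist c (d::'a::metric_space)"
  by (meson add_mono_thms_linordered_semiring(3) dist_triangle order_trans)

lemma dist_chain4: "dist a e \<le> dist a b + dist b c + dist c d + dist d (e::'a::metric_space)"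
  by (meson add_mono_thms_linordered_semiring(3) dist_chain3 dist_triangle order_trans)

lemma dist_chain5: "dist a f \<le> dist a b + dist b c + dist c d + dist d e + dist e (f::'a::metric_space)"
  by (meson add_mono_thms_linordered_semiring(3) dist_chain4 dist_triangle order_trans)

context hconst
begin

lemma transfer:
  assumes s1: "is_solution C F D G E1 \<psi>1" and s2: "is_solution C F D G E2 \<psi>2" and tc2: "t_complete E2"
    and HQ: "\<And>t j j' d. (t, j) \<in> E1 \<Longrightarrow> (t, j') \<in> E2 \<Longrightarrow> d \<in> D \<Longrightarrow>
       (dist (\<psi>1 (t, j)) (g d) < 1 \<and> dist (\<psi>2 (t, j')) d < 1) \<or>
       (dist (\<psi>1 (t, j)) d < 1 \<and> dist (\<psi>2 (t, j')) (g d) < 1) \<Longrightarrow> d \<in> Q"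
    and T0: "T0 \<ge> 0"
    and RA: "\<And>t j. (t, j) \<in> E1 \<Longrightarrow> t \<ge> T0 \<Longrightarrow> \<exists>j'. (t, j') \<in> E2 \<and> rhoA C D G (\<psi>1 (t, j)) (\<psi>2 (t, j')) < \<epsilon>w"
    and RB: "\<And>t j'. (t, j') \<in> E2 \<Longrightarrow> t \<ge> T0 \<Longrightarrow> \<exists>j. (t, j) \<in> E1 \<and> rhoA C D G (\<psi>1 (t, j)) (\<psi>2 (t, j')) < \<epsilon>w"
    and IN: "T0 = 0 \<Longrightarrow> norm (\<psi>1 (0, 0) - \<psi>2 (0, 0)) < \<epsilon>w"
    and tj: "(t, j) \<in> E1" and tT: "t \<ge> T0 + \<sigma> \<or> T0 = 0"
  shows "\<exists>(t', j')\<in>E2. \<bar>t - t'\<bar> < \<eta> \<and> norm (\<psi>1 (t, j) - \<psi>2 (t', j')) < \<eta>"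
proof -
  have h1: "hybrid_time_domain E1" by (rule sol_htd[OF s1])
  have h2: "hybrid_time_domain E2" by (rule sol_htd[OF s2])
  have o1: "ordered_htd E1" by (rule sol_ordered[OF s1])
  have o2: "ordered_htd E2" by (rule sol_ordered[OF s2])
  have t0: "t \<ge> T0" using tT T0 sg htd_nonneg[OF h1 tj] by auto
  have small_t: "T0 = 0" if "t < \<sigma>" using tT that T0 by auto
  define x where "x = \<psi>1 (t, j)"
  obtain j' where j': "(t, j') \<in> E2" "rhoA C D G x (\<psi>2 (t, j')) < \<epsilon>w"
    using RA[OF tj t0] unfolding x_def by blast
  define y where "y = \<psi>2 (t, j')"
  have Ane: "setA C D G \<noteq> {}"
  proof -
    have "\<psi>1 (0, 0) \<in> C \<union> D" by (rule sol_init[OF s1])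
    hence "(\<psi>1 (0, 0), \<psi>1 (0, 0)) \<in> setA C D G" by (auto simp: setA_def)
    thus ?thesis by blast
  qed
  obtain p q where pq: "(p, q) \<in> setA C D G" "dist x p < \<epsilon>w" "dist y q < \<epsilon>w"
    using rho_witness[OF j'(2)[folded y_def] Ane] by blast
  have cases: "p = q \<or> (q \<in> D \<and> p = g q) \<or> (p \<in> D \<and> q = g p)"
    using pq(1) Gg unfolding setA_def by auto
  have ew1: "\<epsilon>w < 1" using N6 ew l0 by linarith
  consider (A) "p = q" | (B) "q \<in> D" "p = g q" | (C) "p \<in> D" "q = g p" using cases by blast
  then show ?thesis
  proof cases
    case A
    have "dist x y \<le> dist x p + dist p y" by (rule dist_triangle)
    hence "dist x y < 2 * \<epsilon>w" using pq(2,3) A by (simp add: dist_commute)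
    hence "norm (x - y) < \<eta>" using N3 l0 ew by (simp add: dist_norm)
    thus ?thesis using j'(1) sg sge unfolding x_def y_def by force
  next
    case B
    have qQ: "q \<in> Q" using HQ[OF tj j'(1) B(1)] pq(2,3) B(2) ew1 unfolding x_def y_def by auto
    have qQ': "q \<in> Q'" using qQ QQ' by blast
    have "(t + \<sigma>, j') \<in> E2 \<or> (\<exists>\<tau>. t \<le> \<tau> \<and> \<tau> < t + \<sigma> \<and> (\<tau>, j') \<in> E2 \<and> (\<tau>, Suc j') \<in> E2)"
      by (rule htd_forward[OF h2 o2 tc2 j'(1) sg])
    moreover have "(t + \<sigma>, j') \<notin> E2"
    proof
      assume "(t + \<sigma>, j') \<in> E2"
      hence "mvflow C F (\<lambda>u. \<psi>2 (t + u, j')) \<sigma>" using sol_mvflow_fwd[OF s2 j'(1) _ sg] by simp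
      from noflowF[OF this qQ] have "2 * \<epsilon>w \<le> dist y q" by (simp add: y_def)
      thus False using pq(3) ew by simp
    qed
    ultimately obtain \<tau> where \<tau>: "t \<le> \<tau>" "\<tau> < t + \<sigma>" "(\<tau>, j') \<in> E2" "(\<tau>, Suc j') \<in> E2" by blast
    define z where "z = \<psi>2 (\<tau>, j')"
    have zD: "z \<in> D" and gz: "\<psi>2 (\<tau>, Suc j') = g z" using sol_jump_g[OF s2 \<tau>(3,4)] by (auto simp: z_def)
    have zy: "norm (z - y) \<le> lsp"
    proof (cases "\<tau> = t")
      case True thus ?thesis using l0 by (simp add: z_def y_def)
    next
      case False
      show ?thesis unfolding z_def y_def
      proof (rule fwd_speed[OF s2 j'(1) \<tau>(3)])
        show "t < \<tau>" using False \<tau>(1) by simp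
        show "\<tau> - t \<le> \<sigma>" using \<tau>(2) by simp
        show "\<exists>k\<in>Q' \<union> g ` Q'. dist (\<psi>2 (t, j')) k < 1" using qQ' pq(3) ew1 unfolding y_def
          by (intro bexI[of _ q]) auto
      qed
    qed
    have "dist z q \<le> dist z y + dist y q" by (rule dist_triangle)
    hence zq: "dist z q < lsp + \<epsilon>w" using zy pq(3) by (simp add: dist_norm)
    have zQ': "z \<in> Q'" using Q'I[OF zD qQ] zq N2' by simp
    have "dist (g z) (g q) < \<eta> / 4" using ucont[OF zQ' qQ'] zq N2 by simp
    moreover have "dist x (g z) \<le> dist x p + dist p (g z)" by (rule dist_triangle)
    ultimately have "dist x (g z) < \<epsilon>w + \<eta> / 4" using pq(2) B(2) by (simp add: dist_commute)
    hence "norm (x - \<psi>2 (\<tau>, Suc j')) < \<eta>" using gz N3 l0 ew by (simp add: dist_norm)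
    moreover have "\<bar>t - \<tau>\<bar> < \<eta>" using \<tau>(1,2) sge by simp
    ultimately show ?thesis using \<tau>(4) unfolding x_def by force
  next
    case C
    have pQ: "p \<in> Q" using HQ[OF tj j'(1) C(1)] pq(2,3) C(2) ew1 unfolding x_def y_def by auto
    have pQ': "p \<in> Q'" using pQ QQ' by blast
    have gpQ: "g p \<in> g ` Q'" using pQ' by blast
    have ynear: "\<exists>k\<in>Q' \<union> g ` Q'. dist y k < 1" using gpQ pq(3) C(2) ew1 by (intro bexI[of _ "g p"]) auto
    have xnear: "\<exists>k\<in>Q' \<union> g ` Q'. dist x k < 1" using pQ' pq(2) ew1 by (intro bexI[of _ p]) auto
    obtain a2 where a2: "a2 \<le> t" "(a2, j') \<in> E2" "\<And>s. (s, j') \<in> E2 \<Longrightarrow> a2 \<le> s" "j' = 0 \<Longrightarrow> a2 = 0"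
      "\<And>k. j' = Suc k \<Longrightarrow> (a2, k) \<in> E2 \<and> (a2, Suc k) \<in> E2"
      by (rule slice_start[OF h2 j'(1)]) (rule that)
    have a2gt: "a2 > t - \<sigma>"
    proof (rule ccontr)
      assume "\<not> a2 > t - \<sigma>"
      hence "(t - \<sigma>, j') \<in> E2" using htd_convex[OF h2 a2(2) j'(1), of "t - \<sigma>"] sg by simp
      hence "mvflow C (\<lambda>x. uminus ` F x) (\<lambda>u. \<psi>2 (t - u, j')) \<sigma>" using sol_mvflow_bwd[OF s2 _ j'(1) sg] by simp
      from noflowB[OF this gpQ] have "2 * \<epsilon>w \<le> dist y (g p)" by (simp add: y_def)
      thus False using pq(3) C(2) ew by simp
    qed
    obtain a1 where a1: "a1 \<le> t" "(a1, j) \<in> E1" "\<And>s. (s, j) \<in> E1 \<Longrightarrow> a1 \<le> s" "j = 0 \<Longrightarrow> a1 = 0"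
      "\<And>k. j = Suc k \<Longrightarrow> (a1, k) \<in> E1 \<and> (a1, Suc k) \<in> E1"
      by (rule slice_start[OF h1 tj]) (rule that)
    have a1far: "a1 \<le> t - \<sigma>" if "j = Suc k" for k
      using landing_far[OF s1, of t k a1 p] tj a1(1) a1(5)[OF that] pQ' pq(2) that unfolding x_def by auto
    have x0x: "norm (\<psi>1 (0, 0) - x) \<le> lsp" if "j = 0" "t < \<sigma>"
    proof -
      have e0: "(0, j) \<in> E1" using a1(2) a1(4)[OF that(1)] by simp
      show ?thesis unfolding x_def using bwd_speed'[OF s1 e0 tj] htd_nonneg[OF h1 tj] that xnear
        unfolding x_def by simp
    qed
    show ?thesis
    proof (cases j')
      case 0
      have ta: "t < \<sigma>" using a2gt a2(4)[OF 0] by simp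
      have T00: "T0 = 0" by (rule small_t[OF ta])
      have e0: "(0, j') \<in> E2" using a2(2) a2(4)[OF 0] by simp
      have y0: "norm (\<psi>2 (0, 0) - y) \<le> lsp"
        using bwd_speed'[OF s2 e0 j'(1)] htd_nonneg[OF h2 j'(1)] ta ynear 0 unfolding y_def by simp
      show ?thesis
      proof (cases j)
        case (Suc k)
        thus ?thesis using a1far[OF Suc] htd_nonneg[OF h1 a1(2)] ta by simp
      next
        case 0 note j0 = this
        have "dist p (g p) \<le> dist p x + dist x (\<psi>1 (0, 0)) + dist (\<psi>1 (0, 0)) (\<psi>2 (0, 0))
              + dist (\<psi>2 (0, 0)) y + dist y (g p)"
          by (rule dist_chain5)
        also have "\<dots> < \<epsilon>w + lsp + \<epsilon>w + lsp + \<epsilon>w"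
        proof -
          have "dist p x < \<epsilon>w" using pq(2) by (simp add: dist_commute)
          moreover have "dist x (\<psi>1 (0, 0)) \<le> lsp" using x0x[OF j0 ta] by (simp add: dist_norm norm_minus_commute)
          moreover have "dist (\<psi>1 (0, 0)) (\<psi>2 (0, 0)) < \<epsilon>w" using IN[OF T00] by (simp add: dist_norm)
          moreover have "dist (\<psi>2 (0, 0)) y \<le> lsp" using y0 by (simp add: dist_norm)
          moreover have "dist y (g p) < \<epsilon>w" using pq(3) C(2) by simp
          ultimately show ?thesis by linarith
        qed
        finally have "dist p (g p) < 3 * \<epsilon>w + 2 * lsp" by simp
        moreover have "d1 \<le> dist p (g p)" by (rule sep1[OF pQ' C(1)])
        ultimately show ?thesis using N4 by simp
      qed
    next
      case (Suc i)
      have jm: "(a2, i) \<in> E2" "(a2, Suc i) \<in> E2" using a2(5)[OF Suc] by auto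
      define z where "z = \<psi>2 (a2, i)"
      have zD: "z \<in> D" using sol_jump_g[OF s2 jm] by (simp add: z_def)
      have close: "norm (x - z) < \<eta>"
      proof -
        obtain a3 where a3: "a3 \<le> a2" "(a3, i) \<in> E2" "\<And>s. (s, i) \<in> E2 \<Longrightarrow> a3 \<le> s" "i = 0 \<Longrightarrow> a3 = 0"
          "\<And>k. i = Suc k \<Longrightarrow> (a3, k) \<in> E2 \<and> (a3, Suc k) \<in> E2"
          by (rule slice_start[OF h2 jm(1)]) (rule that)
        show ?thesis
        proof (cases "a3 = a2")
          case True
          show ?thesis
          proof (cases i)
            case (Suc k')
            have "(a2, k') \<in> E2" "(a2, Suc k') \<in> E2" using a3(5)[OF Suc] True by auto
            hence "\<psi>2 (a2, Suc k') = g (\<psi>2 (a2, k'))" "\<psi>2 (a2, k') \<in> D" using sol_jump_g[OF s2] by auto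
            hence "z \<notin> D" using gnD Suc by (simp add: z_def)
            thus ?thesis using zD by simp
          next
            case 0
            have a20: "a2 = 0" using a3(4)[OF 0] True by simp
            have ta: "t < \<sigma>" using a2gt a20 by simp
            have T00: "T0 = 0" by (rule small_t[OF ta])
            have z0: "z = \<psi>2 (0, 0)" using a20 0 by (simp add: z_def)
            show ?thesis
            proof (cases j)
              case (Suc k)
              thus ?thesis using a1far[OF Suc] htd_nonneg[OF h1 a1(2)] ta by simp
            next
              case 0 note j0 = this
              have "norm (x - z) \<le> norm (x - \<psi>1 (0, 0)) + norm (\<psi>1 (0, 0) - z)"
                using norm_triangle_ineq[of "x - \<psi>1 (0, 0)" "\<psi>1 (0, 0) - z"] by simp
              also have "\<dots> < lsp + \<epsilon>w"
                using x0x[OF j0 ta] IN[OF T00] z0 by (simp add: norm_minus_commute add_le_less_mono)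
              finally show ?thesis using N3 ew by simp
            qed
          qed
        next
          case False
          hence a32: "a3 < a2" using a3(1) by simp
          have a12: "a1 < a2"
          proof (cases j)
            case 0
            thus ?thesis using a1(4) htd_nonneg[OF h2 a3(2)] a32 by simp
          next
            case (Suc k)
            thus ?thesis using a1far[OF Suc] a2gt by simp
          qed
          have ea2: "(a2, j) \<in> E1" using htd_convex[OF h1 a1(2) tj, of a2] a12 a2(1) by simp
          define x2 where "x2 = \<psi>1 (a2, j)"
          have x2x: "norm (x2 - x) \<le> lsp"
            unfolding x2_def x_def using bwd_speed'[OF s1 ea2 tj a2(1)] a2gt xnear unfolding x_def by simp
          have c1: "continuous_on {a1..a2} (\<lambda>s. \<psi>1 (s, j))" by (rule sol_cont[OF s1 a1(2) ea2])
          have c2: "continuous_on {a3..a2} (\<lambda>s. \<psi>2 (s, i))" by (rule sol_cont[OF s2 a3(2) jm(1)])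
          obtain \<delta>1 where d1p: "\<delta>1 > 0" "\<And>s. s \<in> {a1..a2} \<Longrightarrow> dist s a2 < \<delta>1 \<Longrightarrow> dist (\<psi>1 (s, j)) x2 < \<epsilon>w"
            using c1 ew a12 unfolding continuous_on_iff x2_def by (metis atLeastAtMost_iff less_imp_le order_refl)
          obtain \<delta>2 where d2p: "\<delta>2 > 0" "\<And>s. s \<in> {a3..a2} \<Longrightarrow> dist s a2 < \<delta>2 \<Longrightarrow> dist (\<psi>2 (s, i)) z < \<epsilon>w"
            using c2 ew a32 unfolding continuous_on_iff z_def by (metis atLeastAtMost_iff less_imp_le order_refl)
          define lo where "lo = max (max a1 a3) T0"
          have loa: "lo < a2"
          proof -
            have "T0 < a2"
            proof (cases "T0 = 0")
              case True thus ?thesis using a12 htd_nonneg[OF h1 a1(2)] by simp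
            next
              case False thus ?thesis using tT a2gt by simp
            qed
            thus ?thesis using a12 a32 by (simp add: lo_def)
          qed
          define m where "m = min (min \<delta>1 \<delta>2) (a2 - lo)"
          have m: "m > 0" "m \<le> \<delta>1" "m \<le> \<delta>2" "m \<le> a2 - lo" using loa d1p(1) d2p(1) by (auto simp: m_def)
          define s where "s = a2 - m / 2"
          have sb: "lo < s" "s < a2" "a2 - s < \<delta>1" "a2 - s < \<delta>2"
            using m unfolding s_def by linarith+
          have sl: "a1 < s" "a3 < s" "T0 < s" using sb(1) by (auto simp: lo_def)
          have es1: "(s, j) \<in> E1" using htd_convex[OF h1 a1(2) ea2, of s] sl sb by simp
          have es2: "(s, i) \<in> E2" using htd_convex[OF h2 a3(2) jm(1), of s] sl sb by simp
          have xs: "dist (\<psi>1 (s, j)) x2 < \<epsilon>w" using d1p(2)[of s] sl sb by (simp add: dist_real_def)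
          have zs: "dist (\<psi>2 (s, i)) z < \<epsilon>w" using d2p(2)[of s] sl sb by (simp add: dist_real_def)
          obtain js where js: "(s, js) \<in> E1" "rhoA C D G (\<psi>1 (s, js)) (\<psi>2 (s, i)) < \<epsilon>w"
            using RB[OF es2] sl by auto
          have jsj: "js = j"
          proof (rule ccontr)
            assume "js \<noteq> j"
            then consider "js < j" | "j < js" by linarith
            thus False
            proof cases
              case 1 thus False using o1 js(1) a1(2) sl unfolding ordered_htd_def by force
            next
              case 2 thus False using o1 js(1) tj sb a2(1) unfolding ordered_htd_def by force
            qed
          qed
          define x' where "x' = \<psi>1 (s, j)"
          define z' where "z' = \<psi>2 (s, i)"
          obtain p' q' where pq': "(p', q') \<in> setA C D G" "dist x' p' < \<epsilon>w" "dist z' q' < \<epsilon>w"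
            using rho_witness[OF js(2)[unfolded jsj, folded x'_def z'_def] Ane] by blast
          have cases': "p' = q' \<or> (q' \<in> D \<and> p' = g q') \<or> (p' \<in> D \<and> q' = g p')"
            using pq'(1) Gg unfolding setA_def by auto
          have "dist x' x \<le> dist x' x2 + dist x2 x" by (rule dist_triangle)
          hence x'x: "dist x' x < \<epsilon>w + lsp"
            using xs x2x unfolding x'_def by (simp add: dist_norm)
          have zz': "dist z' z < \<epsilon>w" using zs by (simp add: z'_def)
          consider (A') "p' = q'" | (B') "q' \<in> D" "p' = g q'" | (C') "p' \<in> D" "q' = g p'" using cases' by blast
          thus ?thesis
          proof cases
            case A'
            have "dist x z \<le> dist x x' + dist x' p' + dist p' z' + dist z' z" by (rule dist_chain4)
            moreover have "dist x x' < \<epsilon>w + lsp" using x'x by (simp add: dist_commute)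
            moreover have "dist p' z' < \<epsilon>w" using pq'(3) A' by (simp add: dist_commute)
            ultimately have "dist x z < 4 * \<epsilon>w + lsp" using pq'(2) zz' by linarith
            thus ?thesis using N3 by (simp add: dist_norm)
          next
            case B'
            have "dist p (g q') \<le> dist p x + dist x x' + dist x' p'"
              using B' dist_chain3[of p "g q'" x x'] by simp
            moreover have "dist x x' < \<epsilon>w + lsp" using x'x by (simp add: dist_commute)
            moreover have "dist p x < \<epsilon>w" using pq(2) by (simp add: dist_commute)
            ultimately have "dist p (g q') < 3 * \<epsilon>w + lsp" using pq'(2) by linarith
            moreover have "d1 \<le> dist p (g q')" by (rule sep1[OF pQ' B'(1)])
            ultimately show ?thesis using N4 l0 by simp
          next
            case C'
            have "dist p' p \<le> dist p' x' + dist x' x + dist x p" by (rule dist_chain3)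
            moreover have "dist p' x' < \<epsilon>w" using pq'(2) by (simp add: dist_commute)
            ultimately have "dist p' p < 3 * \<epsilon>w + lsp" using x'x pq(2) by linarith
            hence "dist p' p < 1" using N6 by simp
            hence p'Q': "p' \<in> Q'" using Q'I[OF C'(1) pQ] by simp
            have "dist (g p') z \<le> dist (g p') z' + dist z' z" by (rule dist_triangle)
            also have "\<dots> < \<epsilon>w + \<epsilon>w" using pq'(3) C'(2) zz' by (simp add: dist_commute)
            finally have "dist (g p') z < 2 * \<epsilon>w" by simp
            moreover have "d2 \<le> dist (g p') z" by (rule sep2[OF p'Q' zD])
            ultimately show ?thesis using N5 by simp
          qed
        qed
      qed
      have "\<bar>t - a2\<bar> < \<eta>" using a2gt a2(1) sge by simp
      thus ?thesis using close jm(1) unfolding x_def z_def by force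
    qed
  qed
qed

end

lemma g_cont:
  fixes G :: "'a::euclidean_space \<Rightarrow> 'a set"
  assumes osc: "osc_rel G D" and lb: "locally_bounded_rel G D" and Gg: "\<And>x. x \<in> D \<Longrightarrow> G x = {g x}"
  shows "continuous_on D g"
  unfolding continuous_on_iff
proof (intro ballI allI impI)
  fix a e assume a: "a \<in> D" and e: "(e::real) > 0"
  obtain \<rho> M where rM: "\<rho> > 0" "M > 0" "\<And>z f. z \<in> D \<Longrightarrow> z \<in> ball a \<rho> \<Longrightarrow> f \<in> G z \<Longrightarrow> norm f \<le> M"
    using lb_ball[OF lb a] by blast
  show "\<exists>d>0. \<forall>x'\<in>D. dist x' a < d \<longrightarrow> dist (g x') (g a) < e"
  proof (rule ccontr)
    assume na: "\<not> ?thesis"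
    have "\<forall>n::nat. \<exists>x'. x' \<in> D \<and> dist x' a < min \<rho> (1 / (real n + 1)) \<and> \<not> dist (g x') (g a) < e"
    proof
      fix n :: nat
      have "min \<rho> (1 / (real n + 1)) > 0" using rM by simp
      thus "\<exists>x'. x' \<in> D \<and> dist x' a < min \<rho> (1 / (real n + 1)) \<and> \<not> dist (g x') (g a) < e"
        using na by blast
    qed
    then obtain xs where xs: "\<And>n. xs n \<in> D" "\<And>n. dist (xs n) a < min \<rho> (1 / (real n + 1))"
      "\<And>n. \<not> dist (g (xs n)) (g a) < e" by metis
    have xlim: "xs \<longlonglongrightarrow> a"
    proof -
      have "(\<lambda>n. xs n - a) \<longlonglongrightarrow> 0"
      proof (rule seq_small)
        fix n show "norm (xs n - a) \<le> 1 / (real n + 1)" using xs(2)[of n] by (simp add: dist_norm)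
      qed
      thus ?thesis using Lim_null by (simp add: LIM_zero_iff)
    qed
    have gb: "g (xs n) \<in> cball 0 M" for n
    proof -
      have "xs n \<in> ball a \<rho>" using xs(2)[of n] by (simp add: dist_commute)
      moreover have "g (xs n) \<in> G (xs n)" using Gg[OF xs(1)] by simp
      ultimately show ?thesis using rM(3)[OF xs(1)] by simp
    qed
    obtain y r where yr: "y \<in> cball 0 M" "strict_mono (r :: nat \<Rightarrow> nat)" "((\<lambda>n. g (xs n)) \<circ> r) \<longlonglongrightarrow> y"
      using seq_compactE[OF compact_imp_seq_compact[OF compact_cball], of "\<lambda>n. g (xs n)"] gb by metis
    have "(xs \<circ> r) \<longlonglongrightarrow> a" using LIMSEQ_subseq_LIMSEQ[OF xlim yr(2)] .
    moreover have "\<forall>i. (xs \<circ> r) i \<in> D \<and> ((\<lambda>n. g (xs n)) \<circ> r) i \<in> G ((xs \<circ> r) i)"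
      using xs(1) Gg by auto
    ultimately have "y \<in> G a" using osc a yr(3) unfolding osc_rel_def by blast
    hence ya: "y = g a" using Gg[OF a] by simp
    have "e \<le> dist y (g a)"
    proof (rule LIMSEQ_le_const)
      show "(\<lambda>i. dist (((\<lambda>n. g (xs n)) \<circ> r) i) (g a)) \<longlonglongrightarrow> dist y (g a)"
        by (intro tendsto_intros yr(3))
      show "\<exists>N. \<forall>i\<ge>N. e \<le> dist (((\<lambda>n. g (xs n)) \<circ> r) i) (g a)" using xs(3) by (auto simp: not_less)
    qed
    thus False using ya e by simp
  qed
qed

lemma g_image_closed:
  fixes G :: "'a::euclidean_space \<Rightarrow> 'a set"
  assumes osc: "osc_rel G D" and Gg: "\<And>x. x \<in> D \<Longrightarrow> G x = {g x}"
    and prp: "\<forall>K. compact K \<longrightarrow> compact {x\<in>D. G x \<inter> K \<noteq> {}}"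
  shows "closed (g ` D)"
  unfolding closed_sequential_limits
proof (intro allI impI)
  fix ys y assume a: "(\<forall>n. ys n \<in> g ` D) \<and> ys \<longlonglongrightarrow> y"
  have "\<forall>n. \<exists>x. x \<in> D \<and> ys n = g x" using a by blast
  then obtain xs where xs: "\<And>n. xs n \<in> D" "\<And>n. ys n = g (xs n)" by metis
  define K where "K = insert y (range ys)"
  have Kc: "compact K" unfolding K_def using compact_sequence_with_limit a by blast
  have P: "compact {x\<in>D. G x \<inter> K \<noteq> {}}" using prp Kc by blast
  have xsP: "xs n \<in> {x\<in>D. G x \<inter> K \<noteq> {}}" for n using xs Gg by (auto simp: K_def)
  obtain x r where xr: "x \<in> {x\<in>D. G x \<inter> K \<noteq> {}}" "strict_mono (r :: nat \<Rightarrow> nat)" "(xs \<circ> r) \<longlonglongrightarrow> x"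
    using seq_compactE[OF compact_imp_seq_compact[OF P], of xs] xsP by metis
  have xD: "x \<in> D" using xr(1) by simp
  have "(ys \<circ> r) \<longlonglongrightarrow> y" using LIMSEQ_subseq_LIMSEQ a xr(2) by blast
  moreover have "\<forall>i. (xs \<circ> r) i \<in> D \<and> (ys \<circ> r) i \<in> G ((xs \<circ> r) i)" using xs Gg by auto
  ultimately have "y \<in> G x" using osc xD xr(3) unfolding osc_rel_def by blast
  thus "y \<in> g ` D" using Gg[OF xD] xD by auto
qed

lemma lb_compact:
  fixes F :: "'a::euclidean_space \<Rightarrow> 'a set"
  assumes lb: "locally_bounded_rel F C" and W: "compact W" "W \<subseteq> C"
  obtains \<rho> M where "\<rho> > 0" "M > 0" "\<And>w z f. w \<in> W \<Longrightarrow> z \<in> C \<Longrightarrow> dist z w < \<rho> \<Longrightarrow> f \<in> F z \<Longrightarrow> norm f \<le> M"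
proof -
  have "\<exists>\<rho>>0. \<exists>M>0. \<forall>w z f. w \<in> W \<longrightarrow> z \<in> C \<longrightarrow> dist z w < \<rho> \<longrightarrow> f \<in> F z \<longrightarrow> norm f \<le> M"
  proof (rule ccontr)
    assume na: "\<not> ?thesis"
    have "\<forall>n::nat. \<exists>w z f. w \<in> W \<and> z \<in> C \<and> dist z w < 1 / (real n + 1) \<and> f \<in> F z \<and> real n < norm f"
    proof
      fix n :: nat
      have "1 / (real n + 1) > 0" "real n + 1 > 0" by simp_all
      hence "\<not> (\<forall>w z f. w \<in> W \<longrightarrow> z \<in> C \<longrightarrow> dist z w < 1 / (real n + 1) \<longrightarrow> f \<in> F z \<longrightarrow> norm f \<le> real n + 1)"
        using na by blast
      then obtain w z f where "w \<in> W" "z \<in> C" "dist z w < 1 / (real n + 1)" "f \<in> F z" "norm f > real n + 1"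
        by (auto simp: not_le)
      thus "\<exists>w z f. w \<in> W \<and> z \<in> C \<and> dist z w < 1 / (real n + 1) \<and> f \<in> F z \<and> real n < norm f"
        by (intro exI[of _ w] exI[of _ z] exI[of _ f]) auto
    qed
    then obtain w z f where wzf: "\<And>n. w n \<in> W" "\<And>n. z n \<in> C" "\<And>n. dist (z n) (w n) < 1 / (real n + 1)"
      "\<And>n. f n \<in> F (z n)" "\<And>n. real n < norm (f n)" by metis
    obtain w0 r where wr: "w0 \<in> W" "strict_mono (r :: nat \<Rightarrow> nat)" "(w \<circ> r) \<longlonglongrightarrow> w0"
      using seq_compactE[OF compact_imp_seq_compact[OF W(1)], of w] wzf(1) by metis
    have w0C: "w0 \<in> C" using wr(1) W(2) by blast
    obtain \<rho> M where rM: "\<rho> > 0" "M > 0" "\<And>z f. z \<in> C \<Longrightarrow> z \<in> ball w0 \<rho> \<Longrightarrow> f \<in> F z \<Longrightarrow> norm f \<le> M"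
      using lb_ball[OF lb w0C] by blast
    have zr: "(z \<circ> r) \<longlonglongrightarrow> w0"
    proof (rule Lim_transform[OF wr(3)])
      show "(\<lambda>n. (z \<circ> r) n - (w \<circ> r) n) \<longlonglongrightarrow> 0"
      proof (rule seq_small)
        fix n
        have "norm ((z \<circ> r) n - (w \<circ> r) n) < 1 / (real (r n) + 1)" using wzf(3)[of "r n"] by (simp add: dist_norm)
        also have "\<dots> \<le> 1 / (real n + 1)" using seq_suble[OF wr(2), of n] by (intro divide_left_mono) auto
        finally show "norm ((z \<circ> r) n - (w \<circ> r) n) \<le> 1 / (real n + 1)" by simp
      qed
    qed
    then obtain N where N: "\<And>n. n \<ge> N \<Longrightarrow> dist ((z \<circ> r) n) w0 < \<rho>" using rM(1) unfolding LIMSEQ_def by blast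
    obtain n where n: "n \<ge> N" "real n > M" using reals_Archimedean2[of M] by (metis le_less_trans max.cobounded1 max.cobounded2 of_nat_le_iff not_le real_arch_simple)
    have "norm (f (r n)) \<le> M" using rM(3)[OF wzf(2) _ wzf(4), of "r n"] N[OF n(1)] by (simp add: dist_commute)
    moreover have "real (r n) < norm (f (r n))" by (rule wzf(5))
    moreover have "real n \<le> real (r n)" using seq_suble[OF wr(2), of n] by simp
    ultimately show False using n(2) by linarith
  qed
  thus ?thesis using that by blast
qed

lemma compact_thick:
  fixes Q :: "'a::euclidean_space set"
  assumes "compact Q"
  shows "compact (\<Union>q\<in>Q. cball q 1)"
proof -
  have "(\<Union>q\<in>Q. cball q 1) = {x + y | x y. x \<in> Q \<and> y \<in> cball 0 1}"
  proof (intro set_eqI iffI)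
    fix z assume "z \<in> (\<Union>q\<in>Q. cball q 1)"
    then obtain q where "q \<in> Q" "dist q z \<le> 1" by auto
    thus "z \<in> {x + y | x y. x \<in> Q \<and> y \<in> cball 0 1}"
      by (intro CollectI exI[of _ q] exI[of _ "z - q"]) (auto simp: dist_norm norm_minus_commute)
  next
    fix z assume "z \<in> {x + y | x y. x \<in> Q \<and> y \<in> cball 0 1}"
    then obtain x y where "z = x + y" "x \<in> Q" "norm y \<le> 1" by auto
    hence "dist x z \<le> 1" by (simp add: dist_norm)
    thus "z \<in> (\<Union>q\<in>Q. cball q 1)" using \<open>x \<in> Q\<close> by auto
  qed
  thus ?thesis by (simp only:) (rule compact_sums[OF assms compact_cball])
qed

context hsys
begin

lemma graph_conv:
  assumes contg: "continuous_on D g" and clgD: "closed (g ` D)" and Qc: "compact Q" and QD: "Q \<subseteq> D"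
    and \<epsilon>: "\<epsilon> > 0"
  obtains \<epsilon>w \<sigma> where "\<epsilon>w > 0" "\<sigma> > 0"
    "\<And>E1 \<psi>1 E2 \<psi>2 T0 t j. is_solution C F D G E1 \<psi>1 \<Longrightarrow> is_solution C F D G E2 \<psi>2 \<Longrightarrow> t_complete E2 \<Longrightarrow>
      (\<And>t j j' d. (t, j) \<in> E1 \<Longrightarrow> (t, j') \<in> E2 \<Longrightarrow> d \<in> D \<Longrightarrow>
         (dist (\<psi>1 (t, j)) (g d) < 1 \<and> dist (\<psi>2 (t, j')) d < 1) \<or>
         (dist (\<psi>1 (t, j)) d < 1 \<and> dist (\<psi>2 (t, j')) (g d) < 1) \<Longrightarrow> d \<in> Q) \<Longrightarrow>
      T0 \<ge> 0 \<Longrightarrow>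
      (\<And>t j. (t, j) \<in> E1 \<Longrightarrow> t \<ge> T0 \<Longrightarrow> \<exists>j'. (t, j') \<in> E2 \<and> rhoA C D G (\<psi>1 (t, j)) (\<psi>2 (t, j')) < \<epsilon>w) \<Longrightarrow>
      (\<And>t j'. (t, j') \<in> E2 \<Longrightarrow> t \<ge> T0 \<Longrightarrow> \<exists>j. (t, j) \<in> E1 \<and> rhoA C D G (\<psi>1 (t, j)) (\<psi>2 (t, j')) < \<epsilon>w) \<Longrightarrow>
      (T0 = 0 \<Longrightarrow> norm (\<psi>1 (0, 0) - \<psi>2 (0, 0)) < \<epsilon>w) \<Longrightarrow>
      (t, j) \<in> E1 \<Longrightarrow> (t \<ge> T0 + \<sigma> \<or> T0 = 0) \<Longrightarrow>
      \<exists>(t', j')\<in>E2. \<bar>t - t'\<bar> < \<epsilon> \<and> norm (\<psi>1 (t, j) - \<psi>2 (t', j')) < \<epsilon>"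
proof -
  define Q' where "Q' = D \<inter> (\<Union>q\<in>Q. cball q 1)"
  have Q'c: "compact Q'" unfolding Q'_def by (rule closed_Int_compact[OF clD compact_thick[OF Qc]])
  have Q'D: "Q' \<subseteq> D" by (auto simp: Q'_def)
  have QQ': "Q \<subseteq> Q'" using QD by (force simp: Q'_def)
  have Q'I: "\<And>d q. d \<in> D \<Longrightarrow> q \<in> Q \<Longrightarrow> dist d q < 1 \<Longrightarrow> d \<in> Q'"
    by (force simp: Q'_def dist_commute)
  have gQ'c: "compact (g ` Q')" by (rule compact_continuous_image[OF continuous_on_subset[OF contg Q'D] Q'c])
  have gQ'C: "g ` Q' \<subseteq> C" using Q'D gC by blast
  define Kall where "Kall = Q' \<union> g ` Q'"
  have Kc: "compact Kall" unfolding Kall_def using Q'c gQ'c by (rule compact_Un)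
  define W where "W = C \<inter> (\<Union>k\<in>Kall. cball k 1)"
  have Wc: "compact W" unfolding W_def by (rule closed_Int_compact[OF clC compact_thick[OF Kc]])
  obtain \<rho>W M where rM: "\<rho>W > 0" "M > 0" "\<And>w z f. w \<in> W \<Longrightarrow> z \<in> C \<Longrightarrow> dist z w < \<rho>W \<Longrightarrow> f \<in> F z \<Longrightarrow> norm f \<le> M"
    using lb_compact[OF lbF Wc] unfolding W_def by blast
  obtain d1 where d1: "d1 > 0" "\<And>a b. a \<in> Q' \<Longrightarrow> b \<in> g ` D \<Longrightarrow> d1 \<le> dist a b"
  proof -
    have "Q' \<inter> g ` D = {}" using Q'D gnD by blast
    thus ?thesis using separate_compact_closed[OF Q'c clgD] that by blast
  qed
  obtain d2 where d2: "d2 > 0" "\<And>a b. a \<in> g ` Q' \<Longrightarrow> b \<in> D \<Longrightarrow> d2 \<le> dist a b"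
  proof -
    have "g ` Q' \<inter> D = {}" using Q'D gnD by blast
    thus ?thesis using separate_compact_closed[OF gQ'c clD] that by blast
  qed
  define \<eta> where "\<eta> = min \<epsilon> 1"
  have \<eta>: "\<eta> > 0" "\<eta> \<le> \<epsilon>" "\<eta> \<le> 1" using \<epsilon> by (auto simp: \<eta>_def)
  obtain \<delta>g where dg: "\<delta>g > 0" "\<And>a b. a \<in> Q' \<Longrightarrow> b \<in> Q' \<Longrightarrow> dist a b < \<delta>g \<Longrightarrow> dist (g a) (g b) < \<eta> / 4"
  proof -
    have "uniformly_continuous_on Q' g"
      by (rule compact_uniformly_continuous[OF continuous_on_subset[OF contg Q'D] Q'c])
    moreover have "\<eta> / 4 > 0" using \<eta> by simp
    ultimately obtain d where "d > 0" "\<forall>x\<in>Q'. \<forall>x'\<in>Q'. dist x' x < d \<longrightarrow> dist (g x') (g x) < \<eta> / 4"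
      unfolding uniformly_continuous_on_def by blast
    thus ?thesis using that[of d] by (metis dist_commute)
  qed
  define lam where "lam = min (min d1 d2) (min \<delta>g \<eta>)"
  have lam: "lam > 0" "lam \<le> d1" "lam \<le> d2" "lam \<le> \<delta>g" "lam \<le> \<eta>" using d1 d2 dg \<eta> by (auto simp: lam_def)
  define \<sigma> where "\<sigma> = min (\<eta> / 2) (min (\<rho>W / (4 * M)) (lam / (8 * M)))"
  have \<sigma>: "\<sigma> > 0" "\<sigma> \<le> \<eta>" using \<eta> rM lam by (auto simp: \<sigma>_def)
  have M\<sigma>1: "M * \<sigma> \<le> \<rho>W / 4"
  proof -
    have "\<sigma> \<le> \<rho>W / (4 * M)" by (simp add: \<sigma>_def)
    hence "M * \<sigma> \<le> M * (\<rho>W / (4 * M))" using rM by (intro mult_left_mono) auto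
    thus ?thesis using rM by simp
  qed
  have M\<sigma>2: "M * \<sigma> \<le> lam / 8"
  proof -
    have "\<sigma> \<le> lam / (8 * M)" by (simp add: \<sigma>_def)
    hence "M * \<sigma> \<le> M * (lam / (8 * M))" using rM by (intro mult_left_mono) auto
    thus ?thesis using rM by simp
  qed
  define lsp where "lsp = M * \<sigma>"
  obtain rf where rf: "rf > 0" "\<And>\<gamma> k. mvflow C F \<gamma> \<sigma> \<Longrightarrow> k \<in> Q \<Longrightarrow> rf \<le> dist (\<gamma> 0) k"
  proof (rule noflow[OF clC oscF lbF cvxF Qc _ \<sigma>(1)])
    fix x assume "x \<in> Q" "x \<in> C"
    thus "F x \<inter> tangent_cone C x = {}" using ii QD by blast
  qed (assumption | rule that)+
  obtain rb where rb: "rb > 0" "\<And>\<gamma> k. mvflow C (\<lambda>x. uminus ` F x) \<gamma> \<sigma> \<Longrightarrow> k \<in> g ` Q' \<Longrightarrow> rb \<le> dist (\<gamma> 0) k"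
  proof (rule noflow[OF clC oscN lbN cvxN gQ'c _ \<sigma>(1)])
    fix x assume "x \<in> g ` Q'" "x \<in> C"
    thus "uminus ` F x \<inter> tangent_cone C x = {}" using iii Q'D by blast
  qed (assumption | rule that)+
  define \<epsilon>w where "\<epsilon>w = min (min (rf / 2) (rb / 2)) (lam / 16)"
  have ew: "\<epsilon>w > 0" "2 * \<epsilon>w \<le> rf" "2 * \<epsilon>w \<le> rb" "\<epsilon>w \<le> lam / 16" using rf rb lam by (auto simp: \<epsilon>w_def)
  have speed_gen: "norm (\<gamma> h - \<gamma> 0) \<le> lsp"
    if fl: "mvflow C F' \<gamma> h" and h: "h \<le> \<sigma>" and c: "\<gamma> 0 \<in> C" and nk: "\<exists>k\<in>Q' \<union> g ` Q'. dist (\<gamma> 0) k < 1"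
      and FF: "\<And>z f. z \<in> C \<Longrightarrow> f \<in> F' z \<Longrightarrow> \<exists>f0\<in>F z. norm f = norm f0" for F' \<gamma> h
  proof -
    have hp: "h > 0" using mvflowD(1)[OF fl] .
    obtain k where k: "k \<in> Kall" "dist (\<gamma> 0) k < 1" using nk unfolding Kall_def by blast
    have "\<gamma> 0 \<in> cball k 1" using k(2) by (simp add: dist_commute)
    hence w: "\<gamma> 0 \<in> W" using c k(1) unfolding W_def by blast
    have Mb: "norm f \<le> M" if zz: "z \<in> C" "z \<in> ball (\<gamma> 0) \<rho>W" "f \<in> F' z" for z f
    proof -
      obtain f0 where "f0 \<in> F z" "norm f = norm f0" using FF[OF zz(1,3)] by blast
      thus ?thesis using rM(3)[OF w zz(1)] zz(2) by (simp add: dist_commute)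
    qed
    have Mh: "M * h < \<rho>W / 2"
    proof -
      have "M * h \<le> M * \<sigma>" using h rM by (intro mult_left_mono) auto
      thus ?thesis using M\<sigma>1 rM by linarith
    qed
    have "norm (\<gamma> h - \<gamma> 0) \<le> M * h"
      by (rule mvflow_speed[OF fl Mb _ Mh]) (use rM hp in auto)
    also have "\<dots> \<le> M * \<sigma>" using h rM by (intro mult_left_mono) auto
    finally show ?thesis by (simp add: lsp_def)
  qed
  interpret hc: hconst C D F G g Q Q' \<eta> \<epsilon>w \<sigma> lsp d1 d2 \<delta>g
  proof (unfold_locales)
    show "Q \<subseteq> D" "Q \<subseteq> Q'" "Q' \<subseteq> D" by fact+
    show "\<And>d q. d \<in> D \<Longrightarrow> q \<in> Q \<Longrightarrow> dist d q < 1 \<Longrightarrow> d \<in> Q'" by (rule Q'I)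
    show "\<And>\<gamma> k. mvflow C F \<gamma> \<sigma> \<Longrightarrow> k \<in> Q \<Longrightarrow> 2 * \<epsilon>w \<le> dist (\<gamma> 0) k"
      using rf(2) ew(2) by (meson order_trans)
    show "\<And>\<gamma> k. mvflow C (\<lambda>x. uminus ` F x) \<gamma> \<sigma> \<Longrightarrow> k \<in> g ` Q' \<Longrightarrow> 2 * \<epsilon>w \<le> dist (\<gamma> 0) k"
      using rb(2) ew(3) by (meson order_trans)
    show "\<And>\<gamma> h. mvflow C F \<gamma> h \<Longrightarrow> h \<le> \<sigma> \<Longrightarrow> \<gamma> 0 \<in> C \<Longrightarrow>
        (\<exists>k\<in>Q' \<union> g ` Q'. dist (\<gamma> 0) k < 1) \<Longrightarrow> norm (\<gamma> h - \<gamma> 0) \<le> lsp"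
      by (rule speed_gen) auto
    show "\<And>\<gamma> h. mvflow C (\<lambda>x. uminus ` F x) \<gamma> h \<Longrightarrow> h \<le> \<sigma> \<Longrightarrow> \<gamma> 0 \<in> C \<Longrightarrow>
        (\<exists>k\<in>Q' \<union> g ` Q'. dist (\<gamma> 0) k < 1) \<Longrightarrow> norm (\<gamma> h - \<gamma> 0) \<le> lsp"
      by (rule speed_gen) auto
    show "\<And>a b. a \<in> Q' \<Longrightarrow> b \<in> D \<Longrightarrow> d1 \<le> dist a (g b)" using d1(2) by blast
    show "\<And>a b. a \<in> Q' \<Longrightarrow> b \<in> D \<Longrightarrow> d2 \<le> dist (g a) b" using d2(2) by blast
    show "\<And>a b. a \<in> Q' \<Longrightarrow> b \<in> Q' \<Longrightarrow> dist a b < \<delta>g \<Longrightarrow> dist (g a) (g b) < \<eta> / 4" by (rule dg(2))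
    show "\<epsilon>w > 0" by (rule ew(1))
    show "\<sigma> > 0" by (rule \<sigma>(1))
    show "lsp \<ge> 0" using rM \<sigma> by (simp add: lsp_def)
    show "\<sigma> \<le> \<eta>" by (rule \<sigma>(2))
    show "lsp + \<epsilon>w < \<delta>g" using M\<sigma>2 ew(4) lam unfolding lsp_def by linarith
    show "lsp + \<epsilon>w < 1" using M\<sigma>2 ew(4) lam \<eta> unfolding lsp_def by linarith
    show "4 * \<epsilon>w + lsp < \<eta>" using M\<sigma>2 ew(4) lam unfolding lsp_def by linarith
    show "3 * \<epsilon>w + 2 * lsp < d1" using M\<sigma>2 ew(4) lam unfolding lsp_def by linarith
    show "2 * \<epsilon>w < d2" using ew(4) lam by linarith
    show "3 * \<epsilon>w + lsp < 1" using M\<sigma>2 ew(4) lam \<eta> unfolding lsp_def by linarith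
  qed
  show ?thesis
  proof (rule that[OF ew(1) \<sigma>(1)])
    fix E1 \<psi>1 E2 \<psi>2 T0 t j
    assume s1: "is_solution C F D G E1 \<psi>1" and s2: "is_solution C F D G E2 \<psi>2" and tc2: "t_complete E2"
      and HQ: "\<And>t j j' d. (t, j) \<in> E1 \<Longrightarrow> (t, j') \<in> E2 \<Longrightarrow> d \<in> D \<Longrightarrow>
         (dist (\<psi>1 (t, j)) (g d) < 1 \<and> dist (\<psi>2 (t, j')) d < 1) \<or>
         (dist (\<psi>1 (t, j)) d < 1 \<and> dist (\<psi>2 (t, j')) (g d) < 1) \<Longrightarrow> d \<in> Q"
      and T0: "T0 \<ge> 0"
      and RA: "\<And>t j. (t, j) \<in> E1 \<Longrightarrow> t \<ge> T0 \<Longrightarrow> \<exists>j'. (t, j') \<in> E2 \<and> rhoA C D G (\<psi>1 (t, j)) (\<psi>2 (t, j')) < \<epsilon>w"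
      and RB: "\<And>t j'. (t, j') \<in> E2 \<Longrightarrow> t \<ge> T0 \<Longrightarrow> \<exists>j. (t, j) \<in> E1 \<and> rhoA C D G (\<psi>1 (t, j)) (\<psi>2 (t, j')) < \<epsilon>w"
      and IN: "T0 = 0 \<Longrightarrow> norm (\<psi>1 (0, 0) - \<psi>2 (0, 0)) < \<epsilon>w"
      and tj: "(t, j) \<in> E1" and tT: "t \<ge> T0 + \<sigma> \<or> T0 = 0"
    have "\<exists>(t', j')\<in>E2. \<bar>t - t'\<bar> < \<eta> \<and> norm (\<psi>1 (t, j) - \<psi>2 (t', j')) < \<eta>"
      apply (rule hc.transfer[OF s1 s2 tc2 _ T0 _ _ _ tj tT])
         apply (rule HQ; assumption)
        apply (rule RA; assumption)
       apply (rule RB; assumption)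
      apply (rule IN; assumption)
      done
    then obtain t' j' where tj': "(t', j') \<in> E2" "\<bar>t - t'\<bar> < \<eta>" "norm (\<psi>1 (t, j) - \<psi>2 (t', j')) < \<eta>"
      by blast
    show "\<exists>(t', j')\<in>E2. \<bar>t - t'\<bar> < \<epsilon> \<and> norm (\<psi>1 (t, j) - \<psi>2 (t', j')) < \<epsilon>"
      using tj' \<eta>(2) by force
  qed
qed

end

theorem theorem2:
  fixes C D :: "'a::euclidean_space set"
    and F G :: "'a \<Rightarrow> 'a set"
    and Es :: "(real \<times> nat) set" and \<phi>s :: "real \<times> nat \<Rightarrow> 'a"
  assumes hbc: "hybrid_basic_conditions C F D G"
    and sol: "is_solution C F D G Es \<phi>s"
    and tc: "t_complete Es"
    and i1: "jump_image D G \<inter> D = {}"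
    and i2: "jump_image D G \<subseteq> C"
    and i3: "\<forall>x\<in>D. \<exists>y. G x = {y}"
    and i4: "\<forall>K. compact K \<longrightarrow> compact {x\<in>D. G x \<inter> K \<noteq> {}}"
    and ii: "\<forall>x\<in>C \<inter> D. F x \<inter> tangent_cone C x = {}"
    and iii: "\<forall>x\<in>C \<inter> jump_image D G. uminus ` F x \<inter> tangent_cone C x = {}"
    and iv: "bounded D \<or> bounded_arc Es \<phi>s"
  shows "(stable_rho C F D G Es \<phi>s \<longrightarrow> stable_graphical C F D G Es \<phi>s) \<and>
         (asymptotically_stable_rho C F D G Es \<phi>s \<longrightarrow> asymptotically_stable_graphical C F D G Es \<phi>s)"
proof -
  have clC: "closed C" and clD: "closed D" and oscF: "osc_rel F C" and lbF: "locally_bounded_rel F C"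
    and cvxF: "\<And>x. x \<in> C \<Longrightarrow> convex (F x)" and oscG: "osc_rel G D" and lbG: "locally_bounded_rel G D"
    using hbc unfolding hybrid_basic_conditions_def by auto
  define g where "g x = (SOME y. G x = {y})" for x
  have Gg: "\<And>x. x \<in> D \<Longrightarrow> G x = {g x}"
  proof -
    fix x assume "x \<in> D"
    hence "\<exists>y. G x = {y}" using i3 by blast
    thus "G x = {g x}" unfolding g_def by (rule someI_ex)
  qed
  have gC: "\<And>x. x \<in> D \<Longrightarrow> g x \<in> C" using i2 Gg unfolding jump_image_def by blast
  have gnD: "\<And>x. x \<in> D \<Longrightarrow> g x \<notin> D" using i1 Gg unfolding jump_image_def by blast
  have ii': "\<And>x. x \<in> C \<Longrightarrow> x \<in> D \<Longrightarrow> F x \<inter> tangent_cone C x = {}" using ii by blast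
  have iii': "\<And>x y. x \<in> C \<Longrightarrow> y \<in> D \<Longrightarrow> x = g y \<Longrightarrow> uminus ` F x \<inter> tangent_cone C x = {}"
  proof -
    fix x y assume a: "x \<in> C" "y \<in> D" "x = g y"
    hence "x \<in> jump_image D G" using Gg unfolding jump_image_def by blast
    thus "uminus ` F x \<inter> tangent_cone C x = {}" using iii a(1) by blast
  qed
  interpret hs: hsys C D F G g
    by (unfold_locales) (fact clC clD oscF lbF | erule cvxF | erule Gg | erule gC | erule gnD | erule ii', assumption | erule iii', assumption+)+
  have contg: "continuous_on D g" by (rule g_cont[OF oscG lbG Gg])
  have clgD: "closed (g ` D)" by (rule g_image_closed[OF oscG Gg i4])
  obtain Q where Qc: "compact Q" and QD: "Q \<subseteq> D"
    and HQ1: "\<And>(E::(real \<times> nat) set) (\<psi>::real \<times> nat \<Rightarrow> 'a) t j j' d. (t, j) \<in> Es \<Longrightarrow> (t, j') \<in> E \<Longrightarrow> d \<in> D \<Longrightarrow>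
       (dist (\<phi>s (t, j)) (g d) < 1 \<and> dist (\<psi> (t, j')) d < 1) \<or>
       (dist (\<phi>s (t, j)) d < 1 \<and> dist (\<psi> (t, j')) (g d) < 1) \<Longrightarrow> d \<in> Q"
    and HQ2: "\<And>(E::(real \<times> nat) set) (\<psi>::real \<times> nat \<Rightarrow> 'a) t j j' d. (t, j) \<in> E \<Longrightarrow> (t, j') \<in> Es \<Longrightarrow> d \<in> D \<Longrightarrow>
       (dist (\<psi> (t, j)) (g d) < 1 \<and> dist (\<phi>s (t, j')) d < 1) \<or>
       (dist (\<psi> (t, j)) d < 1 \<and> dist (\<phi>s (t, j')) (g d) < 1) \<Longrightarrow> d \<in> Q"
  proof (cases "bounded D")
    case True
    show ?thesis by (rule that[of D]) (use True clD in \<open>auto simp: compact_eq_bounded_closed\<close>)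
  next
    case False
    then obtain R where R: "\<And>p. p \<in> Es \<Longrightarrow> norm (\<phi>s p) \<le> R" using iv unfolding bounded_arc_def by blast
    define B where "B = cball (0::'a) (R + 1)"
    define Q where "Q = (D \<inter> B) \<union> {d \<in> D. g d \<in> B}"
    have near: "v \<in> B" if "p \<in> Es" "dist (\<phi>s p) v < 1" for p v
    proof -
      have "norm v \<le> norm (\<phi>s p) + dist (\<phi>s p) v"
        by (metis dist_norm norm_minus_commute norm_triangle_sub add.commute)
      thus ?thesis using R[OF that(1)] that(2) by (simp add: B_def)
    qed
    have eq: "{d \<in> D. g d \<in> B} = {x\<in>D. G x \<inter> B \<noteq> {}}" using Gg by auto
    have c2: "compact {d \<in> D. g d \<in> B}" unfolding eq using i4 by (simp add: B_def)
    have Qc: "compact Q" unfolding Q_def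
      by (intro compact_Un closed_Int_compact clD c2) (simp add: B_def)
    show ?thesis
    proof (rule that[of Q, OF Qc])
      show "Q \<subseteq> D" by (auto simp: Q_def)
      fix E :: "(real \<times> nat) set" and \<psi> :: "real \<times> nat \<Rightarrow> 'a" and t j j' d
      {
        assume "(t, j) \<in> Es" "(t, j') \<in> E" "d \<in> D"
          "(dist (\<phi>s (t, j)) (g d) < 1 \<and> dist (\<psi> (t, j')) d < 1) \<or>
           (dist (\<phi>s (t, j)) d < 1 \<and> dist (\<psi> (t, j')) (g d) < 1)"
        thus "d \<in> Q" using near[of "(t, j)"] unfolding Q_def by blast
      }
      {
        assume "(t, j) \<in> E" "(t, j') \<in> Es" "d \<in> D"
          "(dist (\<psi> (t, j)) (g d) < 1 \<and> dist (\<phi>s (t, j')) d < 1) \<or>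
           (dist (\<psi> (t, j)) d < 1 \<and> dist (\<phi>s (t, j')) (g d) < 1)"
        thus "d \<in> Q" using near[of "(t, j')"] unfolding Q_def by blast
      }
    qed
  qed
  have s0: "\<phi>s (0, 0) \<in> C \<union> D" by (rule sol_init[OF sol])
  have conv: "\<exists>\<epsilon>w \<sigma>. \<epsilon>w > 0 \<and> \<sigma> > 0 \<and> (\<forall>E1 \<psi>1 E2 \<psi>2 T0 t j. is_solution C F D G E1 \<psi>1 \<longrightarrow> is_solution C F D G E2 \<psi>2 \<longrightarrow> t_complete E2 \<longrightarrow>
      (\<forall>t j j' d. (t, j) \<in> E1 \<longrightarrow> (t, j') \<in> E2 \<longrightarrow> d \<in> D \<longrightarrow>
         (dist (\<psi>1 (t, j)) (g d) < 1 \<and> dist (\<psi>2 (t, j')) d < 1) \<or>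
         (dist (\<psi>1 (t, j)) d < 1 \<and> dist (\<psi>2 (t, j')) (g d) < 1) \<longrightarrow> d \<in> Q) \<longrightarrow>
      T0 \<ge> 0 \<longrightarrow>
      (\<forall>t j. (t, j) \<in> E1 \<longrightarrow> t \<ge> T0 \<longrightarrow> (\<exists>j'. (t, j') \<in> E2 \<and> rhoA C D G (\<psi>1 (t, j)) (\<psi>2 (t, j')) < \<epsilon>w)) \<longrightarrow>
      (\<forall>t j'. (t, j') \<in> E2 \<longrightarrow> t \<ge> T0 \<longrightarrow> (\<exists>j. (t, j) \<in> E1 \<and> rhoA C D G (\<psi>1 (t, j)) (\<psi>2 (t, j')) < \<epsilon>w)) \<longrightarrow>
      (T0 = 0 \<longrightarrow> norm (\<psi>1 (0, 0) - \<psi>2 (0, 0)) < \<epsilon>w) \<longrightarrow>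
      (t, j) \<in> E1 \<longrightarrow> (t \<ge> T0 + \<sigma> \<or> T0 = 0) \<longrightarrow>
      (\<exists>(t', j')\<in>E2. \<bar>t - t'\<bar> < \<epsilon> \<and> norm (\<psi>1 (t, j) - \<psi>2 (t', j')) < \<epsilon>))" if \<epsilon>: "\<epsilon> > 0" for \<epsilon>
  proof -
    obtain \<epsilon>w \<sigma> where ew: "\<epsilon>w > 0" "\<sigma> > 0" and P:
      "\<And>E1 \<psi>1 E2 \<psi>2 T0 t j. is_solution C F D G E1 \<psi>1 \<Longrightarrow> is_solution C F D G E2 \<psi>2 \<Longrightarrow> t_complete E2 \<Longrightarrow>
      (\<And>t j j' d. (t, j) \<in> E1 \<Longrightarrow> (t, j') \<in> E2 \<Longrightarrow> d \<in> D \<Longrightarrow>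
         (dist (\<psi>1 (t, j)) (g d) < 1 \<and> dist (\<psi>2 (t, j')) d < 1) \<or>
         (dist (\<psi>1 (t, j)) d < 1 \<and> dist (\<psi>2 (t, j')) (g d) < 1) \<Longrightarrow> d \<in> Q) \<Longrightarrow>
      T0 \<ge> 0 \<Longrightarrow>
      (\<And>t j. (t, j) \<in> E1 \<Longrightarrow> t \<ge> T0 \<Longrightarrow> \<exists>j'. (t, j') \<in> E2 \<and> rhoA C D G (\<psi>1 (t, j)) (\<psi>2 (t, j')) < \<epsilon>w) \<Longrightarrow>
      (\<And>t j'. (t, j') \<in> E2 \<Longrightarrow> t \<ge> T0 \<Longrightarrow> \<exists>j. (t, j) \<in> E1 \<and> rhoA C D G (\<psi>1 (t, j)) (\<psi>2 (t, j')) < \<epsilon>w) \<Longrightarrow>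
      (T0 = 0 \<Longrightarrow> norm (\<psi>1 (0, 0) - \<psi>2 (0, 0)) < \<epsilon>w) \<Longrightarrow>
      (t, j) \<in> E1 \<Longrightarrow> (t \<ge> T0 + \<sigma> \<or> T0 = 0) \<Longrightarrow>
      \<exists>(t', j')\<in>E2. \<bar>t - t'\<bar> < \<epsilon> \<and> norm (\<psi>1 (t, j) - \<psi>2 (t', j')) < \<epsilon>"
      by (rule hs.graph_conv[OF contg clgD Qc QD \<epsilon>]) blast
    show ?thesis
      apply (rule exI[of _ \<epsilon>w], rule exI[of _ \<sigma>])
      apply (intro conjI ew allI impI)
      apply (rule P; blast)
      done
  qed
  have part1: "stable_graphical C F D G Es \<phi>s" if st: "stable_rho C F D G Es \<phi>s"
    unfolding stable_graphical_def
  proof (intro allI impI)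
    fix \<epsilon> :: real assume \<epsilon>: "\<epsilon> > 0"
    obtain \<epsilon>w \<sigma> where ew: "\<epsilon>w > 0" "\<sigma> > 0" and P: "\<forall>E1 \<psi>1 E2 \<psi>2 T0 t j. is_solution C F D G E1 \<psi>1 \<longrightarrow> is_solution C F D G E2 \<psi>2 \<longrightarrow> t_complete E2 \<longrightarrow>
      (\<forall>t j j' d. (t, j) \<in> E1 \<longrightarrow> (t, j') \<in> E2 \<longrightarrow> d \<in> D \<longrightarrow>
         (dist (\<psi>1 (t, j)) (g d) < 1 \<and> dist (\<psi>2 (t, j')) d < 1) \<or>
         (dist (\<psi>1 (t, j)) d < 1 \<and> dist (\<psi>2 (t, j')) (g d) < 1) \<longrightarrow> d \<in> Q) \<longrightarrow>
      T0 \<ge> 0 \<longrightarrow>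
      (\<forall>t j. (t, j) \<in> E1 \<longrightarrow> t \<ge> T0 \<longrightarrow> (\<exists>j'. (t, j') \<in> E2 \<and> rhoA C D G (\<psi>1 (t, j)) (\<psi>2 (t, j')) < \<epsilon>w)) \<longrightarrow>
      (\<forall>t j'. (t, j') \<in> E2 \<longrightarrow> t \<ge> T0 \<longrightarrow> (\<exists>j. (t, j) \<in> E1 \<and> rhoA C D G (\<psi>1 (t, j)) (\<psi>2 (t, j')) < \<epsilon>w)) \<longrightarrow>
      (T0 = 0 \<longrightarrow> norm (\<psi>1 (0, 0) - \<psi>2 (0, 0)) < \<epsilon>w) \<longrightarrow>
      (t, j) \<in> E1 \<longrightarrow> (t \<ge> T0 + \<sigma> \<or> T0 = 0) \<longrightarrow>
      (\<exists>(t', j')\<in>E2. \<bar>t - t'\<bar> < \<epsilon> \<and> norm (\<psi>1 (t, j) - \<psi>2 (t', j')) < \<epsilon>)"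
      using conv[OF \<epsilon>] by blast
    obtain \<delta>w where dw: "\<delta>w > 0" and SR: "\<forall>E \<phi>. is_maximal_solution C F D G E \<phi> \<and>
         rhoA C D G (\<phi>s (0, 0)) (\<phi> (0, 0)) < \<delta>w \<longrightarrow>
         (\<forall>(t, j)\<in>Es. \<exists>j'. (t, j') \<in> E \<and> rhoA C D G (\<phi>s (t, j)) (\<phi> (t, j')) < \<epsilon>w) \<and>
         (\<forall>(t, j')\<in>E. \<exists>j. (t, j) \<in> Es \<and> rhoA C D G (\<phi>s (t, j)) (\<phi> (t, j')) < \<epsilon>w)"
      using st ew(1) unfolding stable_rho_def by blast
    show "\<exists>\<delta>>0. \<forall>E \<phi>. is_maximal_solution C F D G E \<phi> \<and> norm (\<phi>s (0, 0) - \<phi> (0, 0)) < \<delta> \<longrightarrow>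
         (\<forall>(t, j)\<in>Es. \<exists>(t', j')\<in>E. \<bar>t - t'\<bar> < \<epsilon> \<and> norm (\<phi>s (t, j) - \<phi> (t', j')) < \<epsilon>) \<and>
         (\<forall>(t', j')\<in>E. \<exists>(t, j)\<in>Es. \<bar>t - t'\<bar> < \<epsilon> \<and> norm (\<phi>s (t, j) - \<phi> (t', j')) < \<epsilon>)"
    proof (intro exI[of _ "min \<delta>w \<epsilon>w"] conjI allI impI)
      show "min \<delta>w \<epsilon>w > 0" using dw ew by simp
      fix E \<phi> assume a: "is_maximal_solution C F D G E \<phi> \<and> norm (\<phi>s (0, 0) - \<phi> (0, 0)) < min \<delta>w \<epsilon>w"
      have solE: "is_solution C F D G E \<phi>" using a unfolding is_maximal_solution_def by blast
      have "rhoA C D G (\<phi>s (0, 0)) (\<phi> (0, 0)) < \<delta>w" using rho_le[OF s0, of G "\<phi> (0, 0)"] a by simp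
      hence AB: "(\<forall>(t, j)\<in>Es. \<exists>j'. (t, j') \<in> E \<and> rhoA C D G (\<phi>s (t, j)) (\<phi> (t, j')) < \<epsilon>w) \<and>
         (\<forall>(t, j')\<in>E. \<exists>j. (t, j) \<in> Es \<and> rhoA C D G (\<phi>s (t, j)) (\<phi> (t, j')) < \<epsilon>w)" using SR a by blast
      have tcE: "t_complete E" unfolding t_complete_def
      proof
        fix T
        obtain t j where "(t, j) \<in> Es" "t \<ge> T" using tc unfolding t_complete_def by blast
        thus "\<exists>(t, j)\<in>E. t \<ge> T" using AB by blast
      qed
      have n0: "norm (\<phi>s (0, 0) - \<phi> (0, 0)) < \<epsilon>w" using a by simp
      show "\<forall>(t, j)\<in>Es. \<exists>(t', j')\<in>E. \<bar>t - t'\<bar> < \<epsilon> \<and> norm (\<phi>s (t, j) - \<phi> (t', j')) < \<epsilon>"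
      proof (intro ballI, clarify)
        fix t j assume tj: "(t, j) \<in> Es"
        show "\<exists>(t', j')\<in>E. \<bar>t - t'\<bar> < \<epsilon> \<and> norm (\<phi>s (t, j) - \<phi> (t', j')) < \<epsilon>"
        proof -
          have RAm: "\<And>t j. (t, j) \<in> Es \<Longrightarrow> 0 \<le> t \<Longrightarrow> \<exists>j'. (t, j') \<in> E \<and> rhoA C D G (\<phi>s (t, j)) (\<phi> (t, j')) < \<epsilon>w"
            using AB by blast
          have RBm: "\<And>t j'. (t, j') \<in> E \<Longrightarrow> 0 \<le> t \<Longrightarrow> \<exists>j. (t, j) \<in> Es \<and> rhoA C D G (\<phi>s (t, j)) (\<phi> (t, j')) < \<epsilon>w"
            using AB by blast
          show ?thesis
            by (rule P[rule_format, of Es \<phi>s E \<phi> 0 t j, OF sol solE tcE HQ1 _ RAm RBm _ tj]) (use n0 in auto)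
        qed
      qed
      show "\<forall>(t', j')\<in>E. \<exists>(t, j)\<in>Es. \<bar>t - t'\<bar> < \<epsilon> \<and> norm (\<phi>s (t, j) - \<phi> (t', j')) < \<epsilon>"
      proof (intro ballI, clarify)
        fix t' j' assume tj: "(t', j') \<in> E"
        have RA: "\<forall>t j. (t, j) \<in> E \<longrightarrow> t \<ge> 0 \<longrightarrow> (\<exists>j'. (t, j') \<in> Es \<and> rhoA C D G (\<phi> (t, j)) (\<phi>s (t, j')) < \<epsilon>w)"
          using AB by (auto simp: rho_sym[of C D G "\<phi> _"])
        have RB: "\<forall>t j'. (t, j') \<in> Es \<longrightarrow> t \<ge> 0 \<longrightarrow> (\<exists>j. (t, j) \<in> E \<and> rhoA C D G (\<phi> (t, j)) (\<phi>s (t, j')) < \<epsilon>w)"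
          using AB by (auto simp: rho_sym[of C D G "\<phi> _"])
        have n0': "norm (\<phi> (0, 0) - \<phi>s (0, 0)) < \<epsilon>w" using n0 by (simp add: norm_minus_commute)
        have "\<exists>(t2, j2)\<in>Es. \<bar>t' - t2\<bar> < \<epsilon> \<and> norm (\<phi> (t', j') - \<phi>s (t2, j2)) < \<epsilon>"
        proof -
          have RAm: "\<And>t j. (t, j) \<in> E \<Longrightarrow> 0 \<le> t \<Longrightarrow> \<exists>j'. (t, j') \<in> Es \<and> rhoA C D G (\<phi> (t, j)) (\<phi>s (t, j')) < \<epsilon>w"
            using RA by blast
          have RBm: "\<And>t j'. (t, j') \<in> Es \<Longrightarrow> 0 \<le> t \<Longrightarrow> \<exists>j. (t, j) \<in> E \<and> rhoA C D G (\<phi> (t, j)) (\<phi>s (t, j')) < \<epsilon>w"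
            using RB by blast
          show ?thesis
            by (rule P[rule_format, of E \<phi> Es \<phi>s 0 t' j', OF solE sol tc HQ2 _ RAm RBm _ tj]) (use n0' in auto)
        qed
        thus "\<exists>(t, j)\<in>Es. \<bar>t - t'\<bar> < \<epsilon> \<and> norm (\<phi>s (t, j) - \<phi> (t', j')) < \<epsilon>"
          by (auto simp: norm_minus_commute abs_minus_commute)
      qed
    qed
  qed
  show ?thesis
  proof (intro conjI impI)
    assume "stable_rho C F D G Es \<phi>s"
    thus "stable_graphical C F D G Es \<phi>s" by (rule part1)
  next
    assume as: "asymptotically_stable_rho C F D G Es \<phi>s"
    have st: "stable_rho C F D G Es \<phi>s" using as unfolding asymptotically_stable_rho_def by blast
    obtain rw where rw: "rw > 0" and AR: "\<forall>\<epsilon>>0. \<forall>E \<phi>. is_maximal_solution C F D G E \<phi> \<and>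
         rhoA C D G (\<phi>s (0, 0)) (\<phi> (0, 0)) < rw \<longrightarrow>
         (\<exists>T\<ge>0.
           (\<forall>(t, j)\<in>Es. t \<ge> T \<longrightarrow> (\<exists>j'. (t, j') \<in> E \<and> rhoA C D G (\<phi>s (t, j)) (\<phi> (t, j')) < \<epsilon>)) \<and>
           (\<forall>(t, j')\<in>E. t \<ge> T \<longrightarrow> (\<exists>j. (t, j) \<in> Es \<and> rhoA C D G (\<phi>s (t, j)) (\<phi> (t, j')) < \<epsilon>)))"
      using as unfolding asymptotically_stable_rho_def by blast
    show "asymptotically_stable_graphical C F D G Es \<phi>s"
      unfolding asymptotically_stable_graphical_def
    proof (rule conjI[OF part1[OF st]], rule exI[of _ rw], intro conjI rw allI impI)
      fix \<epsilon> :: real and E \<phi> assume \<epsilon>: "\<epsilon> > 0"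
        and a: "is_maximal_solution C F D G E \<phi> \<and> norm (\<phi>s (0, 0) - \<phi> (0, 0)) < rw"
      obtain \<epsilon>w \<sigma> where ew: "\<epsilon>w > 0" "\<sigma> > 0" and P: "\<forall>E1 \<psi>1 E2 \<psi>2 T0 t j. is_solution C F D G E1 \<psi>1 \<longrightarrow> is_solution C F D G E2 \<psi>2 \<longrightarrow> t_complete E2 \<longrightarrow>
        (\<forall>t j j' d. (t, j) \<in> E1 \<longrightarrow> (t, j') \<in> E2 \<longrightarrow> d \<in> D \<longrightarrow>
           (dist (\<psi>1 (t, j)) (g d) < 1 \<and> dist (\<psi>2 (t, j')) d < 1) \<or>
           (dist (\<psi>1 (t, j)) d < 1 \<and> dist (\<psi>2 (t, j')) (g d) < 1) \<longrightarrow> d \<in> Q) \<longrightarrow>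
        T0 \<ge> 0 \<longrightarrow>
        (\<forall>t j. (t, j) \<in> E1 \<longrightarrow> t \<ge> T0 \<longrightarrow> (\<exists>j'. (t, j') \<in> E2 \<and> rhoA C D G (\<psi>1 (t, j)) (\<psi>2 (t, j')) < \<epsilon>w)) \<longrightarrow>
        (\<forall>t j'. (t, j') \<in> E2 \<longrightarrow> t \<ge> T0 \<longrightarrow> (\<exists>j. (t, j) \<in> E1 \<and> rhoA C D G (\<psi>1 (t, j)) (\<psi>2 (t, j')) < \<epsilon>w)) \<longrightarrow>
        (T0 = 0 \<longrightarrow> norm (\<psi>1 (0, 0) - \<psi>2 (0, 0)) < \<epsilon>w) \<longrightarrow>
        (t, j) \<in> E1 \<longrightarrow> (t \<ge> T0 + \<sigma> \<or> T0 = 0) \<longrightarrow>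
        (\<exists>(t', j')\<in>E2. \<bar>t - t'\<bar> < \<epsilon> \<and> norm (\<psi>1 (t, j) - \<psi>2 (t', j')) < \<epsilon>)"
        using conv[OF \<epsilon>] by blast
      have solE: "is_solution C F D G E \<phi>" using a unfolding is_maximal_solution_def by blast
      have "rhoA C D G (\<phi>s (0, 0)) (\<phi> (0, 0)) < rw" using rho_le[OF s0, of G "\<phi> (0, 0)"] a by simp
      then obtain Tw where Tw: "Tw \<ge> 0" and AB:
        "\<forall>(t, j)\<in>Es. t \<ge> Tw \<longrightarrow> (\<exists>j'. (t, j') \<in> E \<and> rhoA C D G (\<phi>s (t, j)) (\<phi> (t, j')) < \<epsilon>w)"
        "\<forall>(t, j')\<in>E. t \<ge> Tw \<longrightarrow> (\<exists>j. (t, j) \<in> Es \<and> rhoA C D G (\<phi>s (t, j)) (\<phi> (t, j')) < \<epsilon>w)"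
        using AR ew(1) a by blast
      define T0 where "T0 = Tw + 1"
      have T0: "T0 \<ge> 0" "T0 \<noteq> 0" "T0 \<ge> Tw" using Tw by (auto simp: T0_def)
      have tcE: "t_complete E" unfolding t_complete_def
      proof
        fix T
        obtain t j where "(t, j) \<in> Es" "t \<ge> max T Tw" using tc unfolding t_complete_def by blast
        thus "\<exists>(t, j)\<in>E. t \<ge> T" using AB(1) by fastforce
      qed
      have RA1: "\<forall>t j. (t, j) \<in> Es \<longrightarrow> t \<ge> T0 \<longrightarrow> (\<exists>j'. (t, j') \<in> E \<and> rhoA C D G (\<phi>s (t, j)) (\<phi> (t, j')) < \<epsilon>w)"
        using AB(1) T0(3) by fastforce
      have RB1: "\<forall>t j'. (t, j') \<in> E \<longrightarrow> t \<ge> T0 \<longrightarrow> (\<exists>j. (t, j) \<in> Es \<and> rhoA C D G (\<phi>s (t, j)) (\<phi> (t, j')) < \<epsilon>w)"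
        using AB(2) T0(3) by fastforce
      have RA2: "\<forall>t j. (t, j) \<in> E \<longrightarrow> t \<ge> T0 \<longrightarrow> (\<exists>j'. (t, j') \<in> Es \<and> rhoA C D G (\<phi> (t, j)) (\<phi>s (t, j')) < \<epsilon>w)"
        using RB1 by (auto simp: rho_sym[of C D G "\<phi> _"])
      have RB2: "\<forall>t j'. (t, j') \<in> Es \<longrightarrow> t \<ge> T0 \<longrightarrow> (\<exists>j. (t, j) \<in> E \<and> rhoA C D G (\<phi> (t, j)) (\<phi>s (t, j')) < \<epsilon>w)"
        using RA1 by (auto simp: rho_sym[of C D G "\<phi> _"])
      show "\<exists>T\<ge>0. (\<forall>(t, j)\<in>Es. t \<ge> T \<longrightarrow> (\<exists>(t', j')\<in>E. \<bar>t - t'\<bar> < \<epsilon> \<and> norm (\<phi>s (t, j) - \<phi> (t', j')) < \<epsilon>)) \<and>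
           (\<forall>(t', j')\<in>E. t' \<ge> T \<longrightarrow> (\<exists>(t, j)\<in>Es. \<bar>t - t'\<bar> < \<epsilon> \<and> norm (\<phi>s (t, j) - \<phi> (t', j')) < \<epsilon>))"
      proof (intro exI[of _ "T0 + \<sigma>"] conjI)
        show "T0 + \<sigma> \<ge> 0" using T0 ew by simp
        show "\<forall>(t, j)\<in>Es. t \<ge> T0 + \<sigma> \<longrightarrow> (\<exists>(t', j')\<in>E. \<bar>t - t'\<bar> < \<epsilon> \<and> norm (\<phi>s (t, j) - \<phi> (t', j')) < \<epsilon>)"
        proof (intro ballI, clarify)
          fix t j assume tj: "(t, j) \<in> Es" "t \<ge> T0 + \<sigma>"
          show "\<exists>(t', j')\<in>E. \<bar>t - t'\<bar> < \<epsilon> \<and> norm (\<phi>s (t, j) - \<phi> (t', j')) < \<epsilon>"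
          proof -
            have RAm: "\<And>t j. (t, j) \<in> Es \<Longrightarrow> T0 \<le> t \<Longrightarrow> \<exists>j'. (t, j') \<in> E \<and> rhoA C D G (\<phi>s (t, j)) (\<phi> (t, j')) < \<epsilon>w"
              using RA1 by blast
            have RBm: "\<And>t j'. (t, j') \<in> E \<Longrightarrow> T0 \<le> t \<Longrightarrow> \<exists>j. (t, j) \<in> Es \<and> rhoA C D G (\<phi>s (t, j)) (\<phi> (t, j')) < \<epsilon>w"
              using RB1 by blast
            show ?thesis
              by (rule P[rule_format, of Es \<phi>s E \<phi> T0 t j, OF sol solE tcE HQ1 T0(1) RAm RBm _ tj(1)]) (use T0 tj in auto)
          qed
        qed
        show "\<forall>(t', j')\<in>E. t' \<ge> T0 + \<sigma> \<longrightarrow> (\<exists>(t, j)\<in>Es. \<bar>t - t'\<bar> < \<epsilon> \<and> norm (\<phi>s (t, j) - \<phi> (t', j')) < \<epsilon>)"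
        proof (intro ballI, clarify)
          fix t' j' assume tj: "(t', j') \<in> E" "t' \<ge> T0 + \<sigma>"
          have "\<exists>(t2, j2)\<in>Es. \<bar>t' - t2\<bar> < \<epsilon> \<and> norm (\<phi> (t', j') - \<phi>s (t2, j2)) < \<epsilon>"
          proof -
            have RAm: "\<And>t j. (t, j) \<in> E \<Longrightarrow> T0 \<le> t \<Longrightarrow> \<exists>j'. (t, j') \<in> Es \<and> rhoA C D G (\<phi> (t, j)) (\<phi>s (t, j')) < \<epsilon>w"
              using RA2 by blast
            have RBm: "\<And>t j'. (t, j') \<in> Es \<Longrightarrow> T0 \<le> t \<Longrightarrow> \<exists>j. (t, j) \<in> E \<and> rhoA C D G (\<phi> (t, j)) (\<phi>s (t, j')) < \<epsilon>w"
              using RB2 by blast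
            show ?thesis
              by (rule P[rule_format, of E \<phi> Es \<phi>s T0 t' j', OF solE sol tc HQ2 T0(1) RAm RBm _ tj(1)]) (use T0 tj in auto)
          qed
          thus "\<exists>(t, j)\<in>Es. \<bar>t - t'\<bar> < \<epsilon> \<and> norm (\<phi>s (t, j) - \<phi> (t', j')) < \<epsilon>"
            by (auto simp: norm_minus_commute abs_minus_commute)
        qed
      qed
    qed
  qed
qed

end
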